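(* Let $\chi(1),\dots,\chi(L)\in\mathbb C$, let $\kappa=L$ and $\nu(a)=a+\frac{\chi(a)}2$ ($a=1,\dots,L$). Then each of the operators $z_i^{\pm1}$, $d_i$ ($1\le i\le n$) and $K_{i,i+1}P_{i,i+1}$ ($1\le i\le n-1$) on $\mathfrak V$ (equivalently, the image of the degenerate double affine Hecke algebra under the representation $\pi_{\kappa,\nu}$: $t_{\epsilon_i}\mapsto z_i^{-1}$, $\epsilon_i^\vee\mapsto -d_i$, $c\mapsto\kappa$, $s_i\mapsto K_{i,i+1}P_{i,i+1}$) leaves invariant the subspace $\mathrm U'(\mathfrak b^\chi)\mathfrak V$.
   Context: $L\ge2$, $n\ge1$. $\mathfrak V=\mathbb C[z_1^{\pm1},\dots,z_n^{\pm1}]\otimes(\mathbb C^L)^{\otimes n}\cong(\mathbb C[z^{\pm1}]\otimes\mathbb C^L)^{\otimes n}$; $e_{ab}$ are matrix units of $\mathbb C^L$, $X_i$ denotes $X\in\mathrm{End}\,\mathbb C^L$ acting on tensor factor $i$; $K_{ij}$ swaps $z_i,z_j$, $P_{ij}$ swaps tensor factors $i,j$ of $(\mathbb C^L)^{\otimes n}$; $r_{ij}=\frac12\sum_a(e_{aa})_i(e_{aa})_j+\sum_{a<b}(e_{ab})_i(e_{ba})_j$; $\nu_i=\sum_a\nu(a)(e_{aa})_i$. Dunkl operators: $d_i=\kappa z_i\partial_{z_i}+\nu_i+\frac n{2L}-\frac12+\sum_{j>i}\big(\frac{z_j}{z_j-z_i}(K_{ij}-1)P_{ij}+r_{ij}\big)-\sum_{j<i}\big(\frac{z_i}{z_i-z_j}(K_{ij}-1)P_{ij}+r_{ji}\big)$.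 $\widehat{\mathfrak{sl}}_L$ acts on $\mathbb C[z^{\pm1}]\otimes\mathbb C^L$ by $e_{L-a}\mapsto e_{a+1,a}$, $f_{L-a}\mapsto e_{a,a+1}$, $h_{L-a}\mapsto e_{a+1,a+1}-e_{aa}$ ($1\le a\le L-1$), $e_0\mapsto z e_{1L}$, $f_0\mapsto z^{-1}e_{L1}$, and on $\mathfrak V$ diagonally (sum over factors). $\mathrm U'(\mathfrak b^\chi)$ is the non-unital associative subalgebra of $\mathrm U(\widehat{\mathfrak{sl}}_L)$ generated by $h_a^\chi:=h_a-(\chi(L+1-a)-\chi(L-a))\cdot1$ ($a=1,\dots,L-1$) and $f_0,\dots,f_{L-1}$. *)

theory Defs
  imports Complex_Main "HOL-Library.Poly_Mapping"
begin

text \<open>A Laurent polynomial is a finitely supported map from exponent vectors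
  (finitely supported maps nat => int, variable index => exponent) to complex
  coefficients; multiplication is the convolution product of Poly_Mapping.\<close>

type_synonym lpoly = "(nat \<Rightarrow>\<^sub>0 int) \<Rightarrow>\<^sub>0 complex"

definition Zpow :: "nat \<Rightarrow> int \<Rightarrow> lpoly" where
  "Zpow i k = Poly_Mapping.single (Poly_Mapping.single i k) 1"

abbreviation Zv :: "nat \<Rightarrow> lpoly" where
  "Zv i \<equiv> Zpow i 1"

definition sw :: "nat \<Rightarrow> nat \<Rightarrow> nat \<Rightarrow> nat" where
  "sw i j k = (if k = i then j else if k = j then i else k)"

definition Kswap :: "nat \<Rightarrow> nat \<Rightarrow> lpoly \<Rightarrow> lpoly" where
  "Kswap i j p = Poly_Mapping.map_key (Poly_Mapping.map_key (sw i j)) p"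

text \<open>The Euler operator z_i d/dz_i.\<close>
definition euler :: "nat \<Rightarrow> lpoly \<Rightarrow> lpoly" where
  "euler i p = Poly_Mapping.mapp (\<lambda>m c. of_int (Poly_Mapping.lookup m i) * c) p"

text \<open>The operator p |-> z_a/(z_a - z_b) (K_ab - 1) p on Laurent polynomials,
  i.e. the (unique) Laurent polynomial q with (z_a - z_b) q = z_a (K_ab p - p).\<close>
definition ddiv :: "nat \<Rightarrow> nat \<Rightarrow> lpoly \<Rightarrow> lpoly" where
  "ddiv a b p = (THE q. (Zv a - Zv b) * q = Zv a * (Kswap a b p - p))"

text \<open>An element of V is represented by its coefficient (a Laurent polynomial)
  at each basis tensor e_{c 1} (x) ... (x) e_{c n}, where the colouring c
  (tensor factors 1..n, colours 1..L) is a function nat => nat.\<close>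

type_synonym vect = "(nat \<Rightarrow> nat) \<Rightarrow> lpoly"

definition cols :: "nat \<Rightarrow> nat \<Rightarrow> (nat \<Rightarrow> nat) set" where
  "cols n L = {c. (\<forall>i. (i \<in> {1..n} \<longrightarrow> c i \<in> {1..L}) \<and> (i \<notin> {1..n} \<longrightarrow> c i = 0))}"

definition Vsp :: "nat \<Rightarrow> nat \<Rightarrow> vect set" where
  "Vsp n L = {v. (\<forall>c. v c \<noteq> 0 \<longrightarrow> c \<in> cols n L) \<and>
                 (\<forall>c. \<forall>m \<in> Poly_Mapping.keys (v c). Poly_Mapping.keys m \<subseteq> {1..n})}"

text \<open>(e_ab)_i: matrix unit e_ab acting on tensor factor i (e_ab e_x = [b=x] e_a).\<close>
definition Eu :: "nat \<Rightarrow> nat \<Rightarrow> nat \<Rightarrow> vect \<Rightarrow> vect" where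
  "Eu a b i v = (\<lambda>c. if c i = a then v (c(i := b)) else 0)"

definition Pswap :: "nat \<Rightarrow> nat \<Rightarrow> vect \<Rightarrow> vect" where
  "Pswap i j v = (\<lambda>c. v (c \<circ> sw i j))"

definition zmul :: "nat \<Rightarrow> int \<Rightarrow> vect \<Rightarrow> vect" where
  "zmul i k v = (\<lambda>c. Zpow i k * v c)"

definition KV :: "nat \<Rightarrow> nat \<Rightarrow> vect \<Rightarrow> vect" where
  "KV i j v = (\<lambda>c. Kswap i j (v c))"

definition sK :: "nat \<Rightarrow> vect \<Rightarrow> vect" where
  "sK i v = KV i (Suc i) (Pswap i (Suc i) v)"

definition rop :: "nat \<Rightarrow> nat \<Rightarrow> nat \<Rightarrow> vect \<Rightarrow> vect" where
  "rop L i j v = (\<lambda>c. Poly_Mapping.single 0 (1/2) * (\<Sum>a\<in>{1..L}. Eu a a i (Eu a a j v) c)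
       + (\<Sum>a\<in>{1..L}. \<Sum>b\<in>{a<..L}. Eu a b i (Eu b a j v) c))"

definition nuop :: "(nat \<Rightarrow> complex) \<Rightarrow> nat \<Rightarrow> nat \<Rightarrow> vect \<Rightarrow> vect" where
  "nuop \<nu> L i v = (\<lambda>c. \<Sum>a\<in>{1..L}. Poly_Mapping.single 0 (\<nu> a) * Eu a a i v c)"

definition DD :: "nat \<Rightarrow> nat \<Rightarrow> vect \<Rightarrow> vect" where
  "DD a b v = (\<lambda>c. ddiv a b (Pswap a b v c))"

definition scaleV :: "complex \<Rightarrow> vect \<Rightarrow> vect" where
  "scaleV s v = (\<lambda>c. Poly_Mapping.single 0 s * v c)"

text \<open>The Dunkl operator d_i.  Note z_j/(z_j-z_i)(K_ij-1)P_ij = DD j i and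
  z_i/(z_i-z_j)(K_ij-1)P_ij = DD i j (K_ij, P_ij are symmetric in i,j).\<close>
definition dunkl :: "complex \<Rightarrow> (nat \<Rightarrow> complex) \<Rightarrow> nat \<Rightarrow> nat \<Rightarrow> nat \<Rightarrow> vect \<Rightarrow> vect" where
  "dunkl \<kappa> \<nu> n L i v = (\<lambda>c.
      Poly_Mapping.single 0 \<kappa> * euler i (v c)
    + nuop \<nu> L i v c
    + Poly_Mapping.single 0 (of_nat n / (2 * of_nat L) - 1/2) * v c
    + (\<Sum>j\<in>{i<..n}. DD j i v c + rop L i j v c)
    - (\<Sum>j\<in>{1..<i}. DD i j v c + rop L j i v c))"

text \<open>f_b for 0 <= b <= L-1 acting diagonally on V:
  f_{L-a} |-> e_{a,a+1} (1 <= a <= L-1), f_0 |-> z^{-1} e_{L1}.\<close>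
definition f_act :: "nat \<Rightarrow> nat \<Rightarrow> nat \<Rightarrow> vect \<Rightarrow> vect" where
  "f_act n L b v = (\<lambda>c. \<Sum>i\<in>{1..n}.
      (if b = 0 then zmul i (-1) (Eu L 1 i v) c
       else Eu (L - b) (L - b + 1) i v c))"

text \<open>h_b for 1 <= b <= L-1: h_{L-a} |-> e_{a+1,a+1} - e_{aa}, diagonally.\<close>
definition h_act :: "nat \<Rightarrow> nat \<Rightarrow> nat \<Rightarrow> vect \<Rightarrow> vect" where
  "h_act n L b v = (\<lambda>c. \<Sum>i\<in>{1..n}.
      Eu (L - b + 1) (L - b + 1) i v c - Eu (L - b) (L - b) i v c)"

definition hchi_act :: "(nat \<Rightarrow> complex) \<Rightarrow> nat \<Rightarrow> nat \<Rightarrow> nat \<Rightarrow> vect \<Rightarrow> vect" where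
  "hchi_act \<chi> n L b v = (\<lambda>c. h_act n L b v c
      - Poly_Mapping.single 0 (\<chi> (L + 1 - b) - \<chi> (L - b)) * v c)"

definition bgens :: "(nat \<Rightarrow> complex) \<Rightarrow> nat \<Rightarrow> nat \<Rightarrow> (vect \<Rightarrow> vect) set" where
  "bgens \<chi> n L = {hchi_act \<chi> n L b | b. b \<in> {1..L-1}} \<union> {f_act n L b | b. b \<in> {0..L-1}}"

text \<open>U'(b^chi) V: the span of all x v with v in V and x a (nonempty)
  product of generators.\<close>
inductive_set UbV :: "(nat \<Rightarrow> complex) \<Rightarrow> nat \<Rightarrow> nat \<Rightarrow> vect set"
  for \<chi> :: "nat \<Rightarrow> complex" and n L :: nat where
  gen:  "g \<in> bgens \<chi> n L \<Longrightarrow> v \<in> Vsp n L \<Longrightarrow> g v \<in> UbV \<chi> n L"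
| word: "g \<in> bgens \<chi> n L \<Longrightarrow> w \<in> UbV \<chi> n L \<Longrightarrow> g w \<in> UbV \<chi> n L"
| zero: "(\<lambda>c. 0) \<in> UbV \<chi> n L"
| add:  "w \<in> UbV \<chi> n L \<Longrightarrow> w' \<in> UbV \<chi> n L \<Longrightarrow> (\<lambda>c. w c + w' c) \<in> UbV \<chi> n L"
| smul: "w \<in> UbV \<chi> n L \<Longrightarrow> scaleV s w \<in> UbV \<chi> n L"

end

theory Submission
  imports Defs
begin

lemma lookup_single_mult:
  fixes p :: lpoly
  shows "Poly_Mapping.lookup (Poly_Mapping.single m c * p) k = c * Poly_Mapping.lookup p (k - m)"
proof -
  have "Poly_Mapping.lookup (Poly_Mapping.single m c * p) k =
        (\<Sum>l. Poly_Mapping.lookup (Poly_Mapping.single m c) l * (\<Sum>q. Poly_Mapping.lookup p q when k = l + q))"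
    by (rule lookup_mult)
  also have "\<dots> = (\<Sum>l. (c * (\<Sum>q. Poly_Mapping.lookup p q when k = l + q)) when l = m)"
    by (rule Sum_any.cong) (auto simp: lookup_single when_def)
  also have "\<dots> = c * (\<Sum>q. Poly_Mapping.lookup p q when k = m + q)"
    by simp
  also have "(\<Sum>q. Poly_Mapping.lookup p q when k = m + q) = (\<Sum>q. Poly_Mapping.lookup p q when q = k - m)"
    by (rule Sum_any.cong) (auto simp: when_def algebra_simps)
  also have "\<dots> = Poly_Mapping.lookup p (k - m)" by simp
  finally show ?thesis .
qed

lemma Zpow_add: "Zpow i a * Zpow i b = Zpow i (a + b)"
  by (simp add: Zpow_def mult_single single_add)

lemma Zpow_0: "Zpow i 0 = 1"
  by (simp add: Zpow_def)

lemma Zpow_inv: "Zpow i k * Zpow i (-k) = 1"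
  by (simp add: Zpow_add Zpow_0)

definition Lp :: "nat \<Rightarrow> lpoly set" where
  "Lp n = {p. \<forall>m\<in>Poly_Mapping.keys p. Poly_Mapping.keys m \<subseteq> {1..n}}"

lemma Lp_0 [simp]: "0 \<in> Lp n" by (simp add: Lp_def)

lemma Lp_add [simp]:
  assumes "p \<in> Lp n" "q \<in> Lp n" shows "p + q \<in> Lp n"
proof -
  have "\<forall>m\<in>Poly_Mapping.keys (p + q). Poly_Mapping.keys m \<subseteq> {1..n}"
  proof
    fix m assume "m \<in> Poly_Mapping.keys (p + q)"
    then have "m \<in> Poly_Mapping.keys p \<or> m \<in> Poly_Mapping.keys q" using keys_add[of p q] by blast
    then show "Poly_Mapping.keys m \<subseteq> {1..n}" using assms unfolding Lp_def by blast
  qed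
  then show ?thesis unfolding Lp_def by simp
qed

lemma Lp_uminus [simp]: "p \<in> Lp n \<Longrightarrow> - p \<in> Lp n"
  unfolding Lp_def by simp

lemma Lp_diff [simp]: "p \<in> Lp n \<Longrightarrow> q \<in> Lp n \<Longrightarrow> p - q \<in> Lp n"
  using Lp_add[of p n "-q"] Lp_uminus[of q n] by (simp only: diff_conv_add_uminus)

lemma Lp_mult [simp]: "p \<in> Lp n \<Longrightarrow> q \<in> Lp n \<Longrightarrow> p * q \<in> Lp n"
proof -
  assume p: "p \<in> Lp n" and q: "q \<in> Lp n"
  show "p * q \<in> Lp n"
    unfolding Lp_def
  proof (intro CollectI ballI)
    fix m assume "m \<in> Poly_Mapping.keys (p * q)"
    then obtain x y where m: "m = x + y" and x: "x \<in> Poly_Mapping.keys p" and y: "y \<in> Poly_Mapping.keys q"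
      using keys_mult by blast
    have "Poly_Mapping.keys m \<subseteq> Poly_Mapping.keys x \<union> Poly_Mapping.keys y"
      unfolding m by (rule keys_add)
    then show "Poly_Mapping.keys m \<subseteq> {1..n}" using p q x y unfolding Lp_def by blast
  qed
qed

lemma Lp_sum [simp]: "(\<And>x. x \<in> A \<Longrightarrow> f x \<in> Lp n) \<Longrightarrow> sum f A \<in> Lp n"
  by (induction A rule: infinite_finite_induct) auto

lemma Lp_single0 [simp]: "Poly_Mapping.single 0 s \<in> Lp n"
  by (simp add: Lp_def)

lemma Lp_1 [simp]: "1 \<in> Lp n"
  by (simp add: Lp_def)

lemma Lp_Zpow [simp]: "i \<in> {1..n} \<Longrightarrow> Zpow i k \<in> Lp n"
  by (simp add: Lp_def Zpow_def)

lemma Lp_single: "Poly_Mapping.keys m \<subseteq> {1..n} \<Longrightarrow> Poly_Mapping.single m c \<in> Lp n"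
  by (simp add: Lp_def)

lemma poly_sum_mono: "(p::lpoly) = (\<Sum>m\<in>Poly_Mapping.keys p. Poly_Mapping.single m (Poly_Mapping.lookup p m))"
proof (rule poly_mapping_eqI)
  fix k
  have "Poly_Mapping.lookup (\<Sum>m\<in>Poly_Mapping.keys p. Poly_Mapping.single m (Poly_Mapping.lookup p m)) k
     = (\<Sum>m\<in>Poly_Mapping.keys p. (if m = k then Poly_Mapping.lookup p m else 0))"
    by (simp add: lookup_sum lookup_single when_def)
  also have "\<dots> = Poly_Mapping.lookup p k"
    by (simp add: in_keys_iff)
  finally show "Poly_Mapping.lookup p k = Poly_Mapping.lookup (\<Sum>m\<in>Poly_Mapping.keys p. Poly_Mapping.single m (Poly_Mapping.lookup p m)) k"
    by simp
qed

lemma lookup_single0_mult: "Poly_Mapping.lookup (Poly_Mapping.single 0 s * (p::lpoly)) k = s * Poly_Mapping.lookup p k"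
  by (simp add: lookup_single_mult)

subsection \<open>The swap of variables\<close>

lemma sw_sw [simp]: "sw i j (sw i j k) = k"
  by (simp add: sw_def)

lemma sw_comm: "sw i j = sw j i"
  by (auto simp: sw_def fun_eq_iff)

lemma inj_sw [simp]: "inj (sw i j)"
  by (rule injI) (metis sw_sw)

lemma sw_in: "i \<in> {1..n} \<Longrightarrow> j \<in> {1..n} \<Longrightarrow> (sw i j k \<in> {1..n}) = (k \<in> {1..n})"
  by (auto simp: sw_def)

definition swk :: "nat \<Rightarrow> nat \<Rightarrow> (nat \<Rightarrow>\<^sub>0 int) \<Rightarrow> (nat \<Rightarrow>\<^sub>0 int)" where
  "swk i j m = Poly_Mapping.map_key (sw i j) m"

lemma lookup_swk [simp]: "Poly_Mapping.lookup (swk i j m) k = Poly_Mapping.lookup m (sw i j k)"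
  by (simp add: swk_def map_key.rep_eq)

lemma swk_swk [simp]: "swk i j (swk i j m) = m"
  by (rule poly_mapping_eqI) simp

lemma inj_swk [simp]: "inj (swk i j)"
  by (rule injI) (metis swk_swk)

lemma swk_add: "swk i j (m + m') = swk i j m + swk i j m'"
  by (rule poly_mapping_eqI) (simp add: lookup_add)

lemma swk_diff: "swk i j (m - m') = swk i j m - swk i j m'"
  by (rule poly_mapping_eqI) (simp add: lookup_minus)

lemma swk_single [simp]: "swk i j (Poly_Mapping.single k e) = Poly_Mapping.single (sw i j k) e"
  by (rule poly_mapping_eqI) (auto simp: lookup_single when_def)

lemma keys_swk: "Poly_Mapping.keys (swk i j m) = sw i j -` Poly_Mapping.keys m"
  by (simp add: swk_def keys_map_key)

lemma swk_fun: "swk i j = Poly_Mapping.map_key (sw i j)"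
  by (rule ext) (simp add: swk_def)

lemma lookup_Kswap: "Poly_Mapping.lookup (Kswap i j p) m = Poly_Mapping.lookup p (swk i j m)"
proof -
  have "inj (Poly_Mapping.map_key (sw i j) :: (nat \<Rightarrow>\<^sub>0 int) \<Rightarrow> _)" using inj_swk[of i j] by (simp add: swk_fun)
  then show ?thesis by (simp add: Kswap_def map_key.rep_eq swk_fun)
qed

lemma Kswap_Kswap [simp]: "Kswap i j (Kswap i j p) = p"
  by (rule poly_mapping_eqI) (simp add: lookup_Kswap)

lemma Kswap_add: "Kswap i j (p + q) = Kswap i j p + Kswap i j q"
  by (rule poly_mapping_eqI) (simp add: lookup_Kswap lookup_add)

lemma Kswap_diff: "Kswap i j (p - q) = Kswap i j p - Kswap i j q"
  by (rule poly_mapping_eqI) (simp add: lookup_Kswap lookup_minus)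

lemma Kswap_zero [simp]: "Kswap i j 0 = 0"
  by (rule poly_mapping_eqI) (simp add: lookup_Kswap)

lemma Kswap_uminus: "Kswap i j (- p) = - Kswap i j p"
  by (rule poly_mapping_eqI) (simp add: lookup_Kswap)

lemma Kswap_sum: "Kswap i j (sum f A) = (\<Sum>x\<in>A. Kswap i j (f x))"
  by (induction A rule: infinite_finite_induct) (auto simp: Kswap_add)

lemma Kswap_single: "Kswap i j (Poly_Mapping.single m c) = Poly_Mapping.single (swk i j m) c"
  by (rule poly_mapping_eqI) (auto simp: lookup_Kswap lookup_single when_def)

lemma Kswap_single_mult:
  "Kswap i j (Poly_Mapping.single m c * p) = Poly_Mapping.single (swk i j m) c * Kswap i j p"
proof (rule poly_mapping_eqI)
  fix k
  have "swk i j (k - swk i j m) = swk i j k - m"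
    by (simp add: swk_diff)
  then show "Poly_Mapping.lookup (Kswap i j (Poly_Mapping.single m c * p)) k =
        Poly_Mapping.lookup (Poly_Mapping.single (swk i j m) c * Kswap i j p) k"
    by (simp add: lookup_Kswap lookup_single_mult)
qed

lemma Kswap_Zpow_mult: "Kswap i j (Zpow k e * p) = Zpow (sw i j k) e * Kswap i j p"
  by (simp add: Zpow_def Kswap_single_mult)

lemma Kswap_single0_mult: "Kswap i j (Poly_Mapping.single 0 s * p) = Poly_Mapping.single 0 s * Kswap i j p"
  using Kswap_single_mult[of i j 0 s p] by (simp add: swk_def)

lemma Kswap_Zpow: "Kswap i j (Zpow k e) = Zpow (sw i j k) e"
  by (simp add: Zpow_def Kswap_single)

lemma Lp_Kswap [simp]:
  assumes "i \<in> {1..n}" "j \<in> {1..n}" "p \<in> Lp n"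
  shows "Kswap i j p \<in> Lp n"
  unfolding Lp_def
proof (intro CollectI ballI)
  fix m assume "m \<in> Poly_Mapping.keys (Kswap i j p)"
  then have "swk i j m \<in> Poly_Mapping.keys p" by (simp add: in_keys_iff lookup_Kswap)
  then have "Poly_Mapping.keys (swk i j m) \<subseteq> {1..n}" using assms(3) by (simp add: Lp_def)
  then have *: "\<And>y. sw i j y \<in> Poly_Mapping.keys m \<Longrightarrow> y \<in> {1..n}"
    by (auto simp: keys_swk)
  show "Poly_Mapping.keys m \<subseteq> {1..n}"
  proof
    fix x assume "x \<in> Poly_Mapping.keys m"
    then have "sw i j x \<in> {1..n}" using *[of "sw i j x"] by simp
    then show "x \<in> {1..n}" using sw_in[OF assms(1,2)] by blast
  qed
qed

subsection \<open>The Euler operator\<close>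

lemma lookup_euler: "Poly_Mapping.lookup (euler i p) m = of_int (Poly_Mapping.lookup m i) * Poly_Mapping.lookup p m"
  by (auto simp: euler_def lookup_mapp when_def in_keys_iff)

lemma euler_add: "euler i (p + q) = euler i p + euler i q"
  by (rule poly_mapping_eqI) (simp add: lookup_euler lookup_add algebra_simps)

lemma euler_diff: "euler i (p - q) = euler i p - euler i q"
  by (rule poly_mapping_eqI) (simp add: lookup_euler lookup_minus algebra_simps)

lemma euler_zero [simp]: "euler i 0 = 0"
  by (rule poly_mapping_eqI) (simp add: lookup_euler)

lemma euler_sum: "euler i (sum f A) = (\<Sum>x\<in>A. euler i (f x))"
  by (induction A rule: infinite_finite_induct) (auto simp: euler_add)

lemma euler_single_mult:
  "euler i (Poly_Mapping.single m c * p) = Poly_Mapping.single m c * euler i p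
     + Poly_Mapping.single 0 (of_int (Poly_Mapping.lookup m i)) * (Poly_Mapping.single m c * p)"
  apply (rule poly_mapping_eqI)
  apply (simp only: lookup_euler lookup_add lookup_single_mult lookup_single0_mult)
  apply (simp add: lookup_minus algebra_simps)
  done

lemma euler_single0_mult:
  "euler i (Poly_Mapping.single 0 s * p) = Poly_Mapping.single 0 s * euler i p"
  using euler_single_mult[of i 0 s p] by simp

lemma euler_Zpow_mult:
  "euler i (Zpow k e * p) = Zpow k e * euler i p + (if k = i then Poly_Mapping.single 0 (of_int e) * (Zpow k e * p) else 0)"
  by (simp add: Zpow_def euler_single_mult lookup_single when_def)

lemma Lp_euler [simp]: "p \<in> Lp n \<Longrightarrow> euler i p \<in> Lp n"
proof -
  assume p: "p \<in> Lp n"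
  have "Poly_Mapping.keys (euler i p) \<subseteq> Poly_Mapping.keys p"
    unfolding euler_def by (rule keys_mapp_subset)
  then show ?thesis using p unfolding Lp_def by auto
qed

lemma lookup_Zpow_mult: "Poly_Mapping.lookup (Zpow k e * p) m = Poly_Mapping.lookup p (m - Poly_Mapping.single k e)"
  by (simp add: Zpow_def lookup_single_mult)

lemma nzd:
  assumes ab: "a \<noteq> b" and eq: "(Zv a - Zv b) * q = 0"
  shows "q = 0"
proof -
  have s: "Poly_Mapping.lookup q (x - Poly_Mapping.single a 1) = Poly_Mapping.lookup q (x - Poly_Mapping.single b 1)" for x
  proof -
    have "Poly_Mapping.lookup ((Zv a - Zv b) * q) x = 0" by (simp only: eq lookup_zero)
    then show ?thesis by (simp add: left_diff_distrib lookup_minus lookup_Zpow_mult)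
  qed
  define sh where "sh y N = y + Poly_Mapping.single a (int N) - Poly_Mapping.single b (int N)" for y N
  have iter: "Poly_Mapping.lookup q y = Poly_Mapping.lookup q (sh y N)" for y N
  proof (induction N)
    case 0 then show ?case by (simp add: sh_def)
  next
    case (Suc N)
    have e1: "sh y N + Poly_Mapping.single a 1 - Poly_Mapping.single b 1 = sh y (Suc N)"
      by (rule poly_mapping_eqI) (auto simp add: sh_def lookup_add lookup_minus lookup_single when_def)
    have "Poly_Mapping.lookup q (sh y N) = Poly_Mapping.lookup q (sh y N + Poly_Mapping.single a 1 - Poly_Mapping.single b 1)"
      using s[of "sh y N + Poly_Mapping.single a 1"] by simp
    then show ?case using Suc.IH e1 by simp
  qed
  show "q = 0"
  proof (rule ccontr)
    assume "q \<noteq> 0"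
    then obtain y where y: "Poly_Mapping.lookup q y \<noteq> 0"
      by (metis lookup_zero poly_mapping_eqI)
    have inj: "inj (sh y)"
    proof (rule injI)
      fix N M assume "sh y N = sh y M"
      then have "Poly_Mapping.lookup (sh y N) a = Poly_Mapping.lookup (sh y M) a" by simp
      then show "N = M" using ab by (simp add: sh_def lookup_add lookup_minus lookup_single when_def)
    qed
    have "range (sh y) \<subseteq> Poly_Mapping.keys q"
      using y iter by (auto simp: in_keys_iff)
    then have "finite (range (sh y))" using finite_keys finite_subset by blast
    then show False using inj by (simp add: finite_image_iff)
  qed
qed

lemma ddiv_unique:
  assumes ab: "a \<noteq> b" and eq: "(Zv a - Zv b) * q = Zv a * (Kswap a b p - p)"
  shows "ddiv a b p = q"
  unfolding ddiv_def
proof (rule the_equality)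
  show "(Zv a - Zv b) * q = Zv a * (Kswap a b p - p)" by (rule eq)
  fix q' assume "(Zv a - Zv b) * q' = Zv a * (Kswap a b p - p)"
  then have "(Zv a - Zv b) * (q' - q) = 0" using eq by (simp add: right_diff_distrib)
  from nzd[OF ab this] show "q' = q" by simp
qed

definition Iab :: "nat \<Rightarrow> nat \<Rightarrow> nat \<Rightarrow> lpoly set" where
  "Iab n a b = {x. \<exists>q\<in>Lp n. x = (Zv a - Zv b) * q}"

lemma Iab_0: "0 \<in> Iab n a b"
  unfolding Iab_def by (rule CollectI, rule bexI[of _ 0]) simp_all

lemma Iab_add: "x \<in> Iab n a b \<Longrightarrow> y \<in> Iab n a b \<Longrightarrow> x + y \<in> Iab n a b"
  unfolding Iab_def
  by (auto simp: distrib_left intro!: bexI[of _ "_ + _"])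

lemma Iab_mult: "r \<in> Lp n \<Longrightarrow> x \<in> Iab n a b \<Longrightarrow> r * x \<in> Iab n a b"
  unfolding Iab_def
  by (auto simp: mult.left_commute intro!: bexI[of _ "r * _"])

lemma Iab_sum: "(\<And>x. x \<in> A \<Longrightarrow> f x \<in> Iab n a b) \<Longrightarrow> sum f A \<in> Iab n a b"
  by (induction A rule: infinite_finite_induct) (auto intro: Iab_0 Iab_add)

lemma Zv_Zinv: "Zv a * Zpow a (-1) = 1"
  using Zpow_inv[of a 1] by simp

lemma X_in:
  assumes a: "a \<in> {1..n}" and b: "b \<in> {1..n}"
  shows "Zpow a t * Zpow b (-t) - 1 \<in> Iab n a b"
proof (induction t rule: int_induct[where k=0])
  case base then show ?case by (simp add: Zpow_0 Iab_0)
next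
  case (step1 t)
  have u: "Zpow a 1 * Zpow b (-1) - 1 \<in> Iab n a b"
  proof -
    have "Zpow a 1 * Zpow b (-1) - 1 = (Zv a - Zv b) * Zpow b (-1)"
      using Zv_Zinv[of b] by (simp add: left_diff_distrib)
    then show ?thesis unfolding Iab_def using b by auto
  qed
  have "Zpow a (t + 1) * Zpow b (- (t + 1)) - 1
      = (Zpow a t * Zpow b (-t)) * (Zpow a 1 * Zpow b (-1) - 1) + (Zpow a t * Zpow b (-t) - 1)"
  proof -
    have "Zpow a (t + 1) = Zpow a t * Zpow a 1" by (simp add: Zpow_add)
    moreover have "Zpow b (- (t + 1)) = Zpow b (-t) * Zpow b (-1)" by (simp add: Zpow_add)
    ultimately show ?thesis by (simp add: algebra_simps)
  qed
  moreover have "(Zpow a t * Zpow b (-t)) * (Zpow a 1 * Zpow b (-1) - 1) + (Zpow a t * Zpow b (-t) - 1) \<in> Iab n a b"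
    by (rule Iab_add[OF Iab_mult[OF _ u] step1(2)]) (intro Lp_mult Lp_Zpow a b)
  ultimately show ?case by (simp only:)
next
  case (step2 t)
  have u: "Zpow a (-1) * Zpow b 1 - 1 \<in> Iab n a b"
  proof -
    have "Zpow a (-1) * Zpow b 1 - 1 = (Zv a - Zv b) * (- Zpow a (-1))"
      using Zv_Zinv[of a] by (simp add: algebra_simps)
    moreover have "- Zpow a (-1) \<in> Lp n" using a by simp
    ultimately show ?thesis unfolding Iab_def by (auto intro!: bexI[of _ "- Zpow a (-1)"])
  qed
  have "Zpow a (t - 1) * Zpow b (- (t - 1)) - 1
      = (Zpow a t * Zpow b (-t)) * (Zpow a (-1) * Zpow b 1 - 1) + (Zpow a t * Zpow b (-t) - 1)"
  proof -
    have "Zpow a (t - 1) = Zpow a t * Zpow a (-1)" by (simp add: Zpow_add)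
    moreover have "Zpow b (- (t - 1)) = Zpow b (-t) * Zpow b 1" by (simp add: Zpow_add)
    ultimately show ?thesis by (simp add: algebra_simps)
  qed
  moreover have "(Zpow a t * Zpow b (-t)) * (Zpow a (-1) * Zpow b 1 - 1) + (Zpow a t * Zpow b (-t) - 1) \<in> Iab n a b"
    by (rule Iab_add[OF Iab_mult[OF _ u] step2(2)]) (intro Lp_mult Lp_Zpow a b)
  ultimately show ?case by (simp only:)
qed

lemma swk_eq:
  assumes "a \<noteq> b"
  shows "swk a b m = m + Poly_Mapping.single a (Poly_Mapping.lookup m b - Poly_Mapping.lookup m a)
                       + Poly_Mapping.single b (- (Poly_Mapping.lookup m b - Poly_Mapping.lookup m a))"
  by (rule poly_mapping_eqI) (use assms in \<open>auto simp: lookup_add lookup_single when_def sw_def\<close>)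

lemma mono_in:
  assumes a: "a \<in> {1..n}" and b: "b \<in> {1..n}" and ab: "a \<noteq> b" and m: "Poly_Mapping.keys m \<subseteq> {1..n}"
  shows "Poly_Mapping.single (swk a b m) c - Poly_Mapping.single m c \<in> Iab n a b"
proof -
  define t where "t = Poly_Mapping.lookup m b - Poly_Mapping.lookup m a"
  have "Poly_Mapping.single (swk a b m) c = Poly_Mapping.single m c * (Zpow a t * Zpow b (-t))"
    by (simp add: swk_eq[OF ab] t_def Zpow_def mult_single add.assoc)
  then have "Poly_Mapping.single (swk a b m) c - Poly_Mapping.single m c
      = Poly_Mapping.single m c * (Zpow a t * Zpow b (-t) - 1)"
    by (simp add: right_diff_distrib)
  then show ?thesis using X_in[OF a b] Iab_mult Lp_single[OF m] by simp
qed

lemma ddiv_exists: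
  assumes a: "a \<in> {1..n}" and b: "b \<in> {1..n}" and ab: "a \<noteq> b" and p: "p \<in> Lp n"
  shows "\<exists>q\<in>Lp n. (Zv a - Zv b) * q = Zv a * (Kswap a b p - p)"
proof -
  have "Kswap a b p - p = (\<Sum>m\<in>Poly_Mapping.keys p.
      Poly_Mapping.single (swk a b m) (Poly_Mapping.lookup p m) - Poly_Mapping.single m (Poly_Mapping.lookup p m))"
  proof -
    have "Kswap a b p = (\<Sum>m\<in>Poly_Mapping.keys p. Poly_Mapping.single (swk a b m) (Poly_Mapping.lookup p m))"
      by (subst poly_sum_mono[of p]) (simp add: Kswap_sum Kswap_single)
    then show ?thesis
      by (subst (2) poly_sum_mono[of p]) (simp add: sum_subtractf)
  qed
  also have "\<dots> \<in> Iab n a b"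
    by (rule Iab_sum, rule mono_in[OF a b ab]) (use p in \<open>auto simp: Lp_def\<close>)
  finally have "Zv a * (Kswap a b p - p) \<in> Iab n a b"
    using a by (simp add: Iab_mult)
  then show ?thesis unfolding Iab_def by auto
qed

lemma ddiv_spec:
  assumes a: "a \<in> {1..n}" and b: "b \<in> {1..n}" and ab: "a \<noteq> b" and p: "p \<in> Lp n"
  shows "(Zv a - Zv b) * ddiv a b p = Zv a * (Kswap a b p - p)" "ddiv a b p \<in> Lp n"
proof -
  obtain q where q: "q \<in> Lp n" "(Zv a - Zv b) * q = Zv a * (Kswap a b p - p)"
    using ddiv_exists[OF assms] by blast
  have "ddiv a b p = q" by (rule ddiv_unique[OF ab q(2)])
  then show "(Zv a - Zv b) * ddiv a b p = Zv a * (Kswap a b p - p)" "ddiv a b p \<in> Lp n"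
    using q by simp_all
qed

lemma ddiv_add:
  assumes a: "a \<in> {1..n}" and b: "b \<in> {1..n}" and ab: "a \<noteq> b" and p: "p \<in> Lp n" and p': "p' \<in> Lp n"
  shows "ddiv a b (p + p') = ddiv a b p + ddiv a b p'"
proof (rule ddiv_unique[OF ab])
  show "(Zv a - Zv b) * (ddiv a b p + ddiv a b p') = Zv a * (Kswap a b (p + p') - (p + p'))"
    using ddiv_spec(1)[OF a b ab p] ddiv_spec(1)[OF a b ab p']
    unfolding Kswap_add by algebra
qed

lemma ddiv_diff:
  assumes a: "a \<in> {1..n}" and b: "b \<in> {1..n}" and ab: "a \<noteq> b" and p: "p \<in> Lp n" and p': "p' \<in> Lp n"
  shows "ddiv a b (p - p') = ddiv a b p - ddiv a b p'"
proof (rule ddiv_unique[OF ab])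
  show "(Zv a - Zv b) * (ddiv a b p - ddiv a b p') = Zv a * (Kswap a b (p - p') - (p - p'))"
    using ddiv_spec(1)[OF a b ab p] ddiv_spec(1)[OF a b ab p']
    unfolding Kswap_diff by algebra
qed

lemma ddiv_zero: "a \<noteq> b \<Longrightarrow> ddiv a b 0 = 0"
  by (rule ddiv_unique) simp_all

lemma ddiv_single0:
  assumes a: "a \<in> {1..n}" and b: "b \<in> {1..n}" and ab: "a \<noteq> b" and p: "p \<in> Lp n"
  shows "ddiv a b (Poly_Mapping.single 0 s * p) = Poly_Mapping.single 0 s * ddiv a b p"
proof (rule ddiv_unique[OF ab])
  have "(Zv a - Zv b) * (Poly_Mapping.single 0 s * ddiv a b p) = Poly_Mapping.single 0 s * ((Zv a - Zv b) * ddiv a b p)"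
    by (simp add: ac_simps)
  also have "\<dots> = Zv a * (Kswap a b (Poly_Mapping.single 0 s * p) - Poly_Mapping.single 0 s * p)"
    using ddiv_spec(1)[OF a b ab p] unfolding Kswap_single0_mult by algebra
  finally show "(Zv a - Zv b) * (Poly_Mapping.single 0 s * ddiv a b p) = Zv a * (Kswap a b (Poly_Mapping.single 0 s * p) - Poly_Mapping.single 0 s * p)" .
qed

lemma ddiv_sum:
  assumes a: "a \<in> {1..n}" and b: "b \<in> {1..n}" and ab: "a \<noteq> b" and f: "\<And>x. x \<in> A \<Longrightarrow> f x \<in> Lp n"
  shows "ddiv a b (sum f A) = (\<Sum>x\<in>A. ddiv a b (f x))"
  using f
proof (induction A rule: infinite_finite_induct)
  case (infinite A) then show ?case by (simp add: ddiv_zero[OF ab])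
next
  case empty then show ?case by (simp add: ddiv_zero[OF ab])
next
  case (insert x F)
  then show ?case by (simp add: ddiv_add[OF a b ab])
qed

lemma Lp_ddiv [simp]:
  "a \<in> {1..n} \<Longrightarrow> b \<in> {1..n} \<Longrightarrow> a \<noteq> b \<Longrightarrow> p \<in> Lp n \<Longrightarrow> ddiv a b p \<in> Lp n"
  by (rule ddiv_spec(2))

lemma aux1: fixes x y u v D P K :: "'a::comm_ring_1" assumes h: "(x - y)*D = x*(K - P)" and "x*u = 1" "y*v = 1"
  shows "(x - y)*(v*D + v*P) = x*(v*K - u*P)"
proof -
  have "(x - y)*(v*D + v*P) = v*((x-y)*D) + x*v*P - (y*v)*P" by (simp add: algebra_simps)
  also have "\<dots> = v*(x*(K - P)) + x*v*P - P" using assms by simp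
  also have "\<dots> = x*v*K - P" by (simp add: algebra_simps)
  also have "\<dots> = x*(v*K) - (x*u)*P" using assms by (simp add: algebra_simps)
  also have "\<dots> = x*(v*K - u*P)" by (simp add: algebra_simps)
  finally show ?thesis .
qed
lemma aux2: fixes x y u v D P K :: "'a::comm_ring_1" assumes h: "(x - y)*D = x*(K - P)" and "x*u = 1" "y*v = 1"
  shows "(x - y)*(u*D - v*P) = x*(u*K - v*P)"
proof -
  have "(x - y)*(u*D - v*P) = u*((x-y)*D) - x*v*P + (y*v)*P" by (simp add: algebra_simps)
  also have "\<dots> = u*(x*(K - P)) - x*v*P + P" using assms by simp
  also have "\<dots> = (x*u)*K - (x*u)*P - x*v*P + P" by (simp add: algebra_simps)
  also have "\<dots> = K - x*v*P" using assms by simp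
  also have "\<dots> = (x*u)*K - x*v*P" using assms by simp
  also have "\<dots> = x*(u*K - v*P)" by (simp add: algebra_simps)
  finally show ?thesis .
qed
lemma aux3: fixes x y w D P K :: "'a::comm_ring_1" assumes h: "(x - y)*D = x*(K - P)"
  shows "(x - y)*(w*D) = x*(w*K - w*P)"
proof -
  have "(x - y)*(w*D) = w*((x-y)*D)" by (simp add: algebra_simps)
  also have "\<dots> = w*(x*(K - P))" using h by simp
  also have "\<dots> = x*(w*K - w*P)" by (simp add: algebra_simps)
  finally show ?thesis .
qed

lemma ddiv_Zpow:
  assumes a: "a \<in> {1..n}" and b: "b \<in> {1..n}" and ab: "a \<noteq> b" and p: "p \<in> Lp n"
  shows "ddiv a b (Zpow (sw a b k) (-1) * p) = Zpow k (-1) * ddiv a b p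
           + (if k = b then Zpow b (-1) * p else if k = a then - (Zpow b (-1) * p) else 0)"
proof (rule ddiv_unique[OF ab])
  define D where "D = ddiv a b p"
  have DE: "(Zv a - Zv b) * D = Zv a * (Kswap a b p - p)"
    unfolding D_def by (rule ddiv_spec(1)[OF a b ab p])
  have K: "Kswap a b (Zpow (sw a b k) (-1) * p) = Zpow k (-1) * Kswap a b p"
    by (simp add: Kswap_Zpow_mult)
  have ia: "Zv a * Zpow a (-1) = 1" and ib: "Zv b * Zpow b (-1) = 1" by (simp_all add: Zv_Zinv)
  show "(Zv a - Zv b) * (Zpow k (-1) * D + (if k = b then Zpow b (-1) * p else if k = a then - (Zpow b (-1) * p) else 0))
      = Zv a * (Kswap a b (Zpow (sw a b k) (-1) * p) - Zpow (sw a b k) (-1) * p)"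
  proof (cases "k = b")
    case True
    then have sk: "sw a b k = a" by (simp add: sw_def)
    have "(Zv a - Zv b) * (Zpow k (-1) * D) = Zpow b (-1) * ((Zv a - Zv b) * D)" using True by (simp add: ac_simps)
    have K': "Kswap a b (Zpow a (-1) * p) = Zpow b (-1) * Kswap a b p" using K sk True by simp
    have "(Zv a - Zv b) * (Zpow b (-1) * D + Zpow b (-1) * p) = Zv a * (Zpow b (-1) * Kswap a b p - Zpow a (-1) * p)"
      by (rule aux1[OF DE ia ib])
    then show ?thesis unfolding sk K' using True by simp
  next
    case False
    show ?thesis
    proof (cases "k = a")
      case True
      then have sk: "sw a b k = b" by (simp add: sw_def)
      have K': "Kswap a b (Zpow b (-1) * p) = Zpow a (-1) * Kswap a b p" using K sk True by simp
      have "(Zv a - Zv b) * (Zpow a (-1) * D - Zpow b (-1) * p) = Zv a * (Zpow a (-1) * Kswap a b p - Zpow b (-1) * p)"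
        by (rule aux2[OF DE ia ib])
      then show ?thesis unfolding sk K' using True False by simp
    next
      case False2: False
      then have sk: "sw a b k = k" using False by (simp add: sw_def)
      have K': "Kswap a b (Zpow k (-1) * p) = Zpow k (-1) * Kswap a b p" using K sk by simp
      have "(Zv a - Zv b) * (Zpow k (-1) * D) = Zv a * (Zpow k (-1) * Kswap a b p - Zpow k (-1) * p)"
        by (rule aux3[OF DE])
      then show ?thesis unfolding sk K' using False False2 by simp
    qed
  qed
qed

lemma cols_iff: "c \<in> cols n L \<longleftrightarrow> (\<forall>i. (i \<in> {1..n} \<longrightarrow> c i \<in> {1..L}) \<and> (i \<notin> {1..n} \<longrightarrow> c i = 0))"
  by (simp add: cols_def)

lemma cols_upd: "c \<in> cols n L \<Longrightarrow> i \<in> {1..n} \<Longrightarrow> b \<in> {1..L} \<Longrightarrow> c(i:=b) \<in> cols n L"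
  by (simp add: cols_iff)

lemma cols_upd_rev: "c(i:=b) \<in> cols n L \<Longrightarrow> i \<in> {1..n} \<Longrightarrow> c i \<in> {1..L} \<Longrightarrow> c \<in> cols n L"
  unfolding cols_iff by (metis fun_upd_apply)

lemma cols_val: "c \<in> cols n L \<Longrightarrow> k \<in> {1..n} \<Longrightarrow> c k \<in> {1..L}"
  by (simp add: cols_iff)

lemma cols_sw: "i \<in> {1..n} \<Longrightarrow> j \<in> {1..n} \<Longrightarrow> (c \<circ> sw i j \<in> cols n L) = (c \<in> cols n L)"
  unfolding cols_iff
proof (intro iffI allI)
  fix k
  assume ij: "i \<in> {1..n}" "j \<in> {1..n}" and h: "\<forall>k. (k \<in> {1..n} \<longrightarrow> (c \<circ> sw i j) k \<in> {1..L}) \<and> (k \<notin> {1..n} \<longrightarrow> (c \<circ> sw i j) k = 0)"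
  have "c k = (c \<circ> sw i j) (sw i j k)" by simp
  then show "(k \<in> {1..n} \<longrightarrow> c k \<in> {1..L}) \<and> (k \<notin> {1..n} \<longrightarrow> c k = 0)"
    using h[rule_format, of "sw i j k"] sw_in[OF ij, of k] by auto
next
  fix k
  assume ij: "i \<in> {1..n}" "j \<in> {1..n}" and h: "\<forall>k. (k \<in> {1..n} \<longrightarrow> c k \<in> {1..L}) \<and> (k \<notin> {1..n} \<longrightarrow> c k = 0)"
  show "(k \<in> {1..n} \<longrightarrow> (c \<circ> sw i j) k \<in> {1..L}) \<and> (k \<notin> {1..n} \<longrightarrow> (c \<circ> sw i j) k = 0)"
    using h[rule_format, of "sw i j k"] sw_in[OF ij, of k] by auto
qed

subsection \<open>The space V\<close>

lemma Vsp_iff: "v \<in> Vsp n L \<longleftrightarrow> (\<forall>c. c \<notin> cols n L \<longrightarrow> v c = 0) \<and> (\<forall>c. v c \<in> Lp n)"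
  unfolding Vsp_def Lp_def by blast

lemma VspI: "(\<And>c. c \<notin> cols n L \<Longrightarrow> v c = 0) \<Longrightarrow> (\<And>c. v c \<in> Lp n) \<Longrightarrow> v \<in> Vsp n L"
  by (simp add: Vsp_iff)

lemma Vsp0: "v \<in> Vsp n L \<Longrightarrow> c \<notin> cols n L \<Longrightarrow> v c = 0"
  by (simp add: Vsp_iff)

lemma VspL [simp]: "v \<in> Vsp n L \<Longrightarrow> v c \<in> Lp n"
  by (simp add: Vsp_iff)

lemma Vsp_eqI:
  assumes "v \<in> Vsp n L" "w \<in> Vsp n L" "\<And>c. c \<in> cols n L \<Longrightarrow> v c = w c"
  shows "v = w"
proof
  fix c show "v c = w c"
    using assms by (cases "c \<in> cols n L") (simp_all add: Vsp0)
qed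

lemma Vsp_zero [simp]: "(\<lambda>c. 0) \<in> Vsp n L"
  by (rule VspI) simp_all

lemma Vsp_add [simp]: "v \<in> Vsp n L \<Longrightarrow> w \<in> Vsp n L \<Longrightarrow> (\<lambda>c. v c + w c) \<in> Vsp n L"
  by (rule VspI) (simp_all add: Vsp0)

lemma Vsp_diff [simp]: "v \<in> Vsp n L \<Longrightarrow> w \<in> Vsp n L \<Longrightarrow> (\<lambda>c. v c - w c) \<in> Vsp n L"
  by (rule VspI) (simp_all add: Vsp0)

lemma Vsp_mult [simp]: "v \<in> Vsp n L \<Longrightarrow> (\<And>c. f c \<in> Lp n) \<Longrightarrow> (\<lambda>c. f c * v c) \<in> Vsp n L"
  by (rule VspI) (simp_all add: Vsp0)

lemma Vsp_sum [simp]: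
  assumes "\<And>x. x \<in> A \<Longrightarrow> f x \<in> Vsp n L"
  shows "(\<lambda>c. \<Sum>x\<in>A. f x c) \<in> Vsp n L"
proof (rule VspI)
  fix c assume "c \<notin> cols n L"
  then show "(\<Sum>x\<in>A. f x c) = 0" using assms Vsp0 by (metis sum.neutral)
next
  fix c show "(\<Sum>x\<in>A. f x c) \<in> Lp n" using assms by (intro Lp_sum) (metis VspL)
qed

lemma Vsp_scaleV [simp]: "v \<in> Vsp n L \<Longrightarrow> scaleV s v \<in> Vsp n L"
  unfolding scaleV_def by simp

lemma Vsp_Eu [simp]:
  assumes "v \<in> Vsp n L" "a \<in> {1..L}" "b \<in> {1..L}" "i \<in> {1..n}"
  shows "Eu a b i v \<in> Vsp n L"
proof (rule VspI)
  fix c assume c: "c \<notin> cols n L"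
  show "Eu a b i v c = 0"
  proof (cases "c i = a")
    case True
    then have "c(i:=b) \<notin> cols n L" using c cols_upd_rev assms(2,4) by metis
    then show ?thesis using assms(1) by (simp add: Eu_def Vsp0)
  qed (simp add: Eu_def)
qed (use assms in \<open>simp add: Eu_def\<close>)

lemma Vsp_Pswap [simp]:
  assumes "v \<in> Vsp n L" "i \<in> {1..n}" "j \<in> {1..n}"
  shows "Pswap i j v \<in> Vsp n L"
  by (rule VspI) (use assms in \<open>simp_all add: Pswap_def Vsp0 cols_sw\<close>)

lemma Vsp_KV [simp]:
  assumes "v \<in> Vsp n L" "i \<in> {1..n}" "j \<in> {1..n}"
  shows "KV i j v \<in> Vsp n L"
  by (rule VspI) (use assms in \<open>simp_all add: KV_def Vsp0\<close>)

lemma Vsp_zmul [simp]: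
  assumes "v \<in> Vsp n L" "i \<in> {1..n}"
  shows "zmul i k v \<in> Vsp n L"
  by (rule VspI) (use assms in \<open>simp_all add: zmul_def Vsp0\<close>)

lemma Vsp_euler [simp]:
  assumes "v \<in> Vsp n L"
  shows "(\<lambda>c. euler i (v c)) \<in> Vsp n L"
  by (rule VspI) (use assms in \<open>simp_all add: Vsp0\<close>)

lemma Vsp_DDc [simp]:
  assumes "v \<in> Vsp n L" "a \<in> {1..n}" "b \<in> {1..n}" "a \<noteq> b"
  shows "(\<lambda>c. ddiv a b (v (c \<circ> sw a b))) \<in> Vsp n L"
  by (rule VspI) (use assms in \<open>simp_all add: Vsp0 cols_sw ddiv_zero\<close>)

subsection \<open>Clean forms of the operators\<close>

definition EE :: "nat \<Rightarrow> nat \<Rightarrow> vect \<Rightarrow> vect" where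
  "EE a i v = (\<lambda>c. if c i = a then v (c(i := Suc a)) else 0)"
definition FA :: "nat \<Rightarrow> nat \<Rightarrow> vect \<Rightarrow> vect" where
  "FA n a v = (\<lambda>c. \<Sum>k\<in>{1..n}. EE a k v c)"
definition E0 :: "nat \<Rightarrow> nat \<Rightarrow> vect \<Rightarrow> vect" where
  "E0 L i v = (\<lambda>c. if c i = L then v (c(i := 1)) else 0)"
definition F0 :: "nat \<Rightarrow> nat \<Rightarrow> vect \<Rightarrow> vect" where
  "F0 n L v = (\<lambda>c. \<Sum>k\<in>{1..n}. Zpow k (-1) * E0 L k v c)"
definition cst :: "complex \<Rightarrow> lpoly" where
  "cst s = Poly_Mapping.single 0 s"
definition ind :: "bool \<Rightarrow> complex" where
  "ind P = (if P then 1 else 0)"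
definition hco :: "nat \<Rightarrow> (nat \<Rightarrow> nat) \<Rightarrow> nat \<Rightarrow> complex" where
  "hco n c a = (\<Sum>k\<in>{1..n}. ind (c k = Suc a) - ind (c k = a))"
definition HC :: "nat \<Rightarrow> (nat \<Rightarrow> complex) \<Rightarrow> nat \<Rightarrow> vect \<Rightarrow> vect" where
  "HC n \<chi> a v = (\<lambda>c. cst (hco n c a - (\<chi> (Suc a) - \<chi> a)) * v c)"
definition rr :: "nat \<Rightarrow> nat \<Rightarrow> vect \<Rightarrow> vect" where
  "rr i j v = (\<lambda>c. (if c i = c j then cst (1/2) * v c else 0) + (if c i < c j then v (c \<circ> sw i j) else 0))"
definition DDc :: "nat \<Rightarrow> nat \<Rightarrow> vect \<Rightarrow> vect" where
  "DDc a b v = (\<lambda>c. ddiv a b (v (c \<circ> sw a b)))"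
definition dk :: "complex \<Rightarrow> (nat \<Rightarrow> complex) \<Rightarrow> nat \<Rightarrow> nat \<Rightarrow> nat \<Rightarrow> vect \<Rightarrow> vect" where
  "dk \<kappa> \<nu> n L i v = (\<lambda>c. cst \<kappa> * euler i (v c) + cst (\<nu> (c i)) * v c
     + cst (of_nat n / (2 * of_nat L) - 1/2) * v c
     + (\<Sum>j\<in>{i<..n}. DDc j i v c + rr i j v c) - (\<Sum>j\<in>{1..<i}. DDc i j v c + rr j i v c))"

lemma cst_add: "cst (x + y) = cst x + cst y" by (simp add: cst_def single_add)
lemma cst_diff: "cst (x - y) = cst x - cst y" by (simp add: cst_def single_diff)
lemma cst_mult: "cst (x * y) = cst x * cst y" by (simp add: cst_def mult_single)
lemma cst_0 [simp]: "cst 0 = 0" by (simp add: cst_def)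
lemma cst_1 [simp]: "cst 1 = 1" by (simp add: cst_def)
lemma cst_uminus: "cst (- x) = - cst x" by (simp add: cst_def single_uminus)
lemma cst_sum: "cst (sum f A) = (\<Sum>x\<in>A. cst (f x))"
  by (induction A rule: infinite_finite_induct) (simp_all add: cst_add)
lemma Lp_cst [simp]: "cst s \<in> Lp n" by (simp add: cst_def)

lemma comp_sw_upd: "c \<circ> sw i j = c(i := c j, j := c i)"
  by (auto simp: fun_eq_iff sw_def)

lemma f_act_pos: "b \<in> {1..L-1} \<Longrightarrow> f_act n L b v = FA n (L - b) v"
proof -
  assume b: "b \<in> {1..L-1}"
  then have "L - b + 1 = Suc (L - b)" by simp
  then show ?thesis using b by (simp add: f_act_def FA_def EE_def Eu_def fun_eq_iff)
qed

lemma f_act_0: "f_act n L 0 v = F0 n L v"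
  unfolding f_act_def F0_def E0_def Eu_def zmul_def
  by (rule ext, rule sum.cong) simp_all

lemma Eu_diag: "Eu a a k v c = (if c k = a then v c else 0)"
  by (auto simp: Eu_def)

lemma hchi_conv:
  assumes b: "b \<in> {1..L-1}"
  shows "hchi_act \<chi> n L b v = HC n \<chi> (L - b) v"
proof (rule ext)
  fix c
  have e1: "L - b + 1 = Suc (L - b)" "L + 1 - b = Suc (L - b)" "Suc L - b = Suc (L - b)" using b by auto
  have "h_act n L b v c = (\<Sum>k\<in>{1..n}. cst (ind (c k = Suc (L - b)) - ind (c k = L - b)) * v c)"
    unfolding h_act_def e1 Eu_diag
    by (rule sum.cong) (auto simp: ind_def cst_def single_uminus)
  also have "\<dots> = cst (hco n c (L - b)) * v c"
    by (simp add: hco_def cst_sum sum_distrib_right)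
  finally show "hchi_act \<chi> n L b v c = HC n \<chi> (L - b) v c"
    by (simp add: hchi_act_def HC_def e1 cst_diff cst_def[symmetric] left_diff_distrib)
qed

lemma nuop_cols:
  assumes c: "c \<in> cols n L" and i: "i \<in> {1..n}"
  shows "nuop \<nu> L i v c = cst (\<nu> (c i)) * v c"
proof -
  have ci: "c i \<in> {1..L}" using cols_val[OF c i] .
  have "nuop \<nu> L i v c = (\<Sum>a\<in>{1..L}. if a = c i then cst (\<nu> a) * v c else 0)"
    unfolding nuop_def Eu_diag by (rule sum.cong) (auto simp: cst_def)
  also have "\<dots> = cst (\<nu> (c i)) * v c" using ci by simp
  finally show ?thesis .
qed

lemma rop_cols:
  assumes c: "c \<in> cols n L" and i: "i \<in> {1..n}" and j: "j \<in> {1..n}" and ij: "i \<noteq> j"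
  shows "rop L i j v c = rr i j v c"
proof -
  have ci: "c i \<in> {1..L}" and cj: "c j \<in> {1..L}" using cols_val[OF c i] cols_val[OF c j] by auto
  have s1: "(\<Sum>a\<in>{1..L}. Eu a a i (Eu a a j v) c) = (if c i = c j then v c else 0)"
  proof -
    have "(\<Sum>a\<in>{1..L}. Eu a a i (Eu a a j v) c) = (\<Sum>a\<in>{1..L}. if a = c i then (if c i = c j then v c else 0) else 0)"
      by (rule sum.cong) (auto simp: Eu_diag)
    also have "\<dots> = (if c i = c j then v c else 0)" using ci by simp
    finally show ?thesis .
  qed
  have s2: "(\<Sum>a\<in>{1..L}. \<Sum>b\<in>{a<..L}. Eu a b i (Eu b a j v) c) = (if c i < c j then v (c \<circ> sw i j) else 0)"
  proof -
    have inner: "(\<Sum>b\<in>{a<..L}. Eu a b i (Eu b a j v) c) = (if a = c i \<and> c i < c j then v (c \<circ> sw i j) else 0)"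
      if a: "a \<in> {1..L}" for a
    proof -
      have "(\<Sum>b\<in>{a<..L}. Eu a b i (Eu b a j v) c) = (\<Sum>b\<in>{a<..L}. if b = c j then (if a = c i then v (c \<circ> sw i j) else 0) else 0)"
        by (rule sum.cong) (use ij in \<open>auto simp: Eu_def comp_sw_upd fun_upd_twist\<close>)
      also have "\<dots> = (if a = c i \<and> c i < c j then v (c \<circ> sw i j) else 0)"
        using cj by auto
      finally show ?thesis .
    qed
    have "(\<Sum>a\<in>{1..L}. \<Sum>b\<in>{a<..L}. Eu a b i (Eu b a j v) c) = (\<Sum>a\<in>{1..L}. if a = c i then (if c i < c j then v (c \<circ> sw i j) else 0) else 0)"
      by (rule sum.cong) (auto simp: inner)
    also have "\<dots> = (if c i < c j then v (c \<circ> sw i j) else 0)" using ci by simp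
    finally show ?thesis .
  qed
  show ?thesis unfolding rop_def rr_def s1 s2 by (simp add: cst_def)
qed

lemma dunkl_cols:
  assumes c: "c \<in> cols n L" and i: "i \<in> {1..n}"
  shows "dunkl \<kappa> \<nu> n L i v c = dk \<kappa> \<nu> n L i v c"
proof -
  have a: "(\<Sum>j\<in>{i<..n}. DD j i v c + rop L i j v c) = (\<Sum>j\<in>{i<..n}. DDc j i v c + rr i j v c)"
    by (rule sum.cong) (use c i in \<open>auto simp: rop_cols DD_def DDc_def Pswap_def\<close>)
  have b: "(\<Sum>j\<in>{1..<i}. DD i j v c + rop L j i v c) = (\<Sum>j\<in>{1..<i}. DDc i j v c + rr j i v c)"
    by (rule sum.cong) (use c i in \<open>auto simp: rop_cols DD_def DDc_def Pswap_def\<close>)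
  show ?thesis unfolding dunkl_def dk_def a b nuop_cols[OF c i] by (simp add: cst_def)
qed

lemma sum_split1:
  assumes "finite A" "i \<in> A" "\<And>k. k \<in> A \<Longrightarrow> f k = g k + (if k = i then d else 0)"
  shows "sum f A = sum g A + (d::'a::comm_monoid_add)"
proof -
  have "sum f A = (\<Sum>k\<in>A. g k + (if k = i then d else 0))" using assms(3) by (rule sum.cong[OF refl])
  also have "\<dots> = sum g A + d" using assms(1,2) by (simp add: sum.distrib)
  finally show ?thesis .
qed

lemma sum_split2:
  assumes "finite A" "i \<in> A" "j \<in> A" "i \<noteq> j"
    "\<And>k. k \<in> A \<Longrightarrow> f k = g k + (if k = i then d1 else 0) + (if k = j then d2 else 0)"
  shows "sum f A = sum g A + (d1::'a::comm_monoid_add) + d2"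
proof -
  have "sum f A = (\<Sum>k\<in>A. g k + (if k = i then d1 else 0) + (if k = j then d2 else 0))"
    using assms(5) by (rule sum.cong[OF refl])
  also have "\<dots> = sum g A + d1 + d2" using assms(1-4) by (simp add: sum.distrib)
  finally show ?thesis .
qed

lemma sw_image: "i \<in> {1..n} \<Longrightarrow> j \<in> {1..n} \<Longrightarrow> sw i j ` {1..n} = {1..n}"
proof -
  assume ij: "i \<in> {1..n}" "j \<in> {1..n}"
  show ?thesis
  proof
    show "sw i j ` {1..n} \<subseteq> {1..n}" using sw_in[OF ij] by blast
    show "{1..n} \<subseteq> sw i j ` {1..n}"
    proof
      fix k assume k: "k \<in> {1..n}"
      have "k = sw i j (sw i j k)" by simp
      moreover have "sw i j k \<in> {1..n}" using sw_in[OF ij] k by blast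
      ultimately show "k \<in> sw i j ` {1..n}" by blast
    qed
  qed
qed

lemma sum_sw_reindex:
  assumes "i \<in> {1..n}" "j \<in> {1..n}"
  shows "(\<Sum>k\<in>{1..n}. f (sw i j k)) = (\<Sum>k\<in>{1..n}. f k)"
proof -
  have "(\<Sum>k\<in>sw i j ` {1..n}. f k) = (\<Sum>k\<in>{1..n}. f (sw i j k))"
    by (rule sum.reindex[unfolded o_def]) (metis inj_sw inj_on_subset subset_UNIV)
  then show ?thesis using sw_image[OF assms] by simp
qed

lemma upd_comp_sw: "(c(k:=t)) \<circ> sw i j = (c \<circ> sw i j)(sw i j k := t)"
  by (auto simp: fun_eq_iff sw_def)

lemma comp_sw_sw [simp]: "(c \<circ> sw i j) \<circ> sw i j = c"
  by (auto simp: fun_eq_iff)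

subsection \<open>Commutators with FA\<close>

lemma FA_euler: "cst \<kappa> * euler i (FA n a v c) = FA n a (\<lambda>c. cst \<kappa> * euler i (v c)) c"
  unfolding FA_def EE_def euler_sum sum_distrib_left by (rule sum.cong) auto

lemma FA_nu:
  assumes i: "i \<in> {1..n}"
  shows "cst (\<nu> (c i)) * FA n a v c = FA n a (\<lambda>c. cst (\<nu> (c i)) * v c) c
           + (if c i = a then cst (\<nu> a - \<nu> (Suc a)) * v (c(i := Suc a)) else 0)"
  unfolding FA_def EE_def sum_distrib_left
  by (rule sum_split1[OF _ i]) (auto simp: cst_diff algebra_simps)

lemma FA_DDc:
  assumes v: "v \<in> Vsp n L" and a: "p \<in> {1..n}" and b: "q \<in> {1..n}" and ab: "p \<noteq> q"
  shows "DDc p q (FA n a v) c = FA n a (DDc p q v) c"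
proof -
  have "FA n a v (c \<circ> sw p q) = (\<Sum>k\<in>{1..n}. EE a (sw p q k) v (c \<circ> sw p q))"
    unfolding FA_def by (rule sum_sw_reindex[OF a b, symmetric])
  also have "\<dots> = (\<Sum>k\<in>{1..n}. if c k = a then v ((c(k := Suc a)) \<circ> sw p q) else 0)"
    by (rule sum.cong) (auto simp: EE_def upd_comp_sw)
  finally have e: "FA n a v (c \<circ> sw p q) = \<dots>" .
  show ?thesis
    unfolding DDc_def e
    by (subst ddiv_sum[OF a b ab]) (auto simp: VspL[OF v] FA_def EE_def ddiv_zero[OF ab] intro!: sum.cong)
qed

lemma FA_sw:
  assumes i: "i \<in> {1..n}" and j: "j \<in> {1..n}"
  shows "FA n a v (c \<circ> sw i j) = (\<Sum>k\<in>{1..n}. if c k = a then v ((c(k := Suc a)) \<circ> sw i j) else 0)"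
proof -
  have "FA n a v (c \<circ> sw i j) = (\<Sum>k\<in>{1..n}. EE a (sw i j k) v (c \<circ> sw i j))"
    unfolding FA_def by (rule sum_sw_reindex[OF i j, symmetric])
  also have "\<dots> = (\<Sum>k\<in>{1..n}. if c k = a then v ((c(k := Suc a)) \<circ> sw i j) else 0)"
    by (rule sum.cong) (auto simp: EE_def upd_comp_sw)
  finally show ?thesis .
qed

lemma half_half: "cst (1/2) + cst (1/2) = 1"
  by (simp add: cst_add[symmetric])

lemma half_aux:
  fixes h A B :: "'a::comm_ring_1"
  assumes "2 * h = 1"
  shows "h * A + (h * B - A) = h * (B - A)"
proof -
  have "h * (B - A) = h * A + (h * B - A) + (A - 2 * h * A)" by (simp add: algebra_simps)
  also have "A - 2 * h * A = 0" using assms by simp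
  finally show ?thesis by simp
qed

lemma half_aux2:
  fixes h A :: "'a::comm_ring_1"
  assumes "2 * h = 1"
  shows "A - h * A = h * A"
proof -
  have "A - h * A = h * A + (A - 2 * h * A)" by (simp add: algebra_simps)
  also have "A - 2 * h * A = 0" using assms by simp
  finally show ?thesis by simp
qed

lemma cst_m1 [simp]: "cst (-1) = -1"
  by (simp add: cst_uminus)

lemma FA_rr:
  assumes i: "i \<in> {1..n}" and j: "j \<in> {1..n}" and ij: "i \<noteq> j"
  shows "rr i j (FA n a v) c = FA n a (rr i j v) c
     + cst (1/2) * (cst (ind (c i = a) - ind (c i = Suc a)) * EE a j v c
                  - cst (ind (c j = a) - ind (c j = Suc a)) * EE a i v c)"
proof -
  define T where "T k = (if c i = c j then cst (1/2) * EE a k v c else 0)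
      + (if c i < c j then (if c k = a then v ((c(k := Suc a)) \<circ> sw i j) else 0) else 0)" for k
  define S where "S k = EE a k (rr i j v) c" for k
  have LHS: "rr i j (FA n a v) c = sum T {1..n}"
    unfolding rr_def FA_sw[OF i j] T_def sum.distrib
    by (simp add: FA_def sum_distrib_left sum.If_cases)
  have RHS: "FA n a (rr i j v) c = sum S {1..n}"
    unfolding FA_def S_def ..
  have f1: "c(i:=Suc a) \<circ> sw i j = c(i:=Suc a)" if "c j = Suc a"
    using that by (auto simp: fun_eq_iff sw_def)
  have f2: "c(j:=Suc a) \<circ> sw i j = c(i:=Suc a)" if "c i = a" "c j = a"
    using that by (auto simp: fun_eq_iff sw_def)
  have hh: "cst (1/2) + cst (1/2) = 1" by (rule half_half)
  have key: "T k = S k + (if k = i then T i - S i else 0) + (if k = j then T j - S j else 0)"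
    if k: "k \<in> {1..n}" for k
  proof (cases "k = i \<or> k = j")
    case True then show ?thesis using ij by auto
  next
    case False
    then have ki: "k \<noteq> i" "i \<noteq> k" "k \<noteq> j" "j \<noteq> k" by auto
    have "T k = S k"
      using ki by (cases "c k = a") (simp_all add: T_def S_def EE_def rr_def)
    then show ?thesis using False by simp
  qed
  have sums: "sum T {1..n} = sum S {1..n} + (T i - S i) + (T j - S j)"
    by (rule sum_split2[OF _ i j ij key]) simp_all
  have fin: "(T i - S i) + (T j - S j) = cst (1/2) * (cst (ind (c i = a) - ind (c i = Suc a)) * EE a j v c
                  - cst (ind (c j = a) - ind (c j = Suc a)) * EE a i v c)"
  proof -
    consider "c i = a" "c j = a" | "c i = a" "c j = Suc a" | "c i = a" "c j \<noteq> a" "c j \<noteq> Suc a"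
      | "c i \<noteq> a" "c j = a" | "c i \<noteq> a" "c j \<noteq> a" by auto
    then show ?thesis
    proof cases
      case 1
      have hh2: "2 * cst (1/2) = 1" unfolding mult_2 by (rule hh)
      from 1 show ?thesis using ij
        by (simp add: T_def S_def EE_def rr_def f2 ind_def) (rule half_aux[OF hh2])
    next
      case 2
      have hh2: "2 * cst (1/2) = 1" unfolding mult_2 by (rule hh)
      from 2 show ?thesis using ij
        by (simp add: T_def S_def EE_def rr_def f1 ind_def hh2)
    next
      case 3
      then show ?thesis using ij
        by (simp add: T_def S_def EE_def rr_def ind_def)
    next
      case 4
      then show ?thesis using ij hh
        by (cases "c i = Suc a") (simp_all add: T_def S_def EE_def rr_def ind_def)
    next
      case 5
      then show ?thesis using ij
        by (simp add: T_def S_def EE_def rr_def ind_def)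
    qed
  qed
  show ?thesis unfolding LHS RHS sums using fin by (simp add: add.assoc)
qed

definition HH :: "nat \<Rightarrow> nat \<Rightarrow> vect \<Rightarrow> vect" where
  "HH a i v = (\<lambda>c. cst (ind (c i = a) - ind (c i = Suc a)) * v c)"

lemma FA_add: "FA n a (\<lambda>c. x c + y c) c = FA n a x c + FA n a y c"
  unfolding FA_def EE_def by (auto simp add: sum.distrib[symmetric] intro!: sum.cong)

lemma FA_diff: "FA n a (\<lambda>c. x c - y c) c = FA n a x c - FA n a y c"
  unfolding FA_def EE_def by (auto simp add: sum_subtractf[symmetric] intro!: sum.cong)

lemma FA_sum: "FA n a (\<lambda>c. \<Sum>j\<in>J. f j c) c = (\<Sum>j\<in>J. FA n a (f j) c)"
  unfolding FA_def EE_def by (subst sum.swap) (auto intro!: sum.cong)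

lemma FA_cmul: "FA n a (\<lambda>c. cst s * x c) c = cst s * FA n a x c"
  unfolding FA_def EE_def by (auto simp add: sum_distrib_left intro!: sum.cong)

lemma K_split: "(i::nat) \<in> {1..n} \<Longrightarrow> {1..n} - {i} = {i<..n} \<union> {1..<i}"
  by auto

lemma sum_K_split:
  assumes "(i::nat) \<in> {1..n}"
  shows "(\<Sum>j\<in>{1..n} - {i}. f j) = (\<Sum>j\<in>{i<..n}. f j) + (\<Sum>j\<in>{1..<i}. f j)"
  unfolding K_split[OF assms] by (rule sum.union_disjoint) auto

lemma corr_alg:
  fixes h1 hi Ei A B d :: "'a::comm_ring_1"
  assumes hh: "h1 + h1 = 1" and hE: "hi * Ei = Ei"
  shows "(-1 - h1 * d) * Ei + h1 * A - h1 * B * Ei = h1 * (A - Ei) + h1 * ((- hi - B - d) * Ei)"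
proof -
  have "h1 * (A - Ei) + h1 * ((- hi - B - d) * Ei) = h1 * A - h1 * Ei - h1 * (hi * Ei) - h1 * B * Ei - h1 * d * Ei"
    by (simp add: algebra_simps)
  also have "\<dots> = h1 * A - (h1 + h1) * Ei - h1 * B * Ei - h1 * d * Ei"
    unfolding hE by (simp add: algebra_simps)
  also have "\<dots> = (-1 - h1 * d) * Ei + h1 * A - h1 * B * Ei"
    unfolding hh by (simp add: algebra_simps)
  finally show ?thesis by simp
qed

lemma FA_HH:
  assumes i: "i \<in> {1..n}"
  shows "FA n a (HH a i v) c = (\<Sum>k\<in>{1..n} - {i}. cst (ind (c i = a) - ind (c i = Suc a)) * EE a k v c) - EE a i v c"
proof -
  have "FA n a (HH a i v) c = EE a i (HH a i v) c + (\<Sum>k\<in>{1..n} - {i}. EE a k (HH a i v) c)"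
    unfolding FA_def by (rule sum.remove[OF _ i]) simp
  also have "EE a i (HH a i v) c = - EE a i v c"
    by (simp add: EE_def HH_def ind_def)
  also have "(\<Sum>k\<in>{1..n} - {i}. EE a k (HH a i v) c) = (\<Sum>k\<in>{1..n} - {i}. cst (ind (c i = a) - ind (c i = Suc a)) * EE a k v c)"
    by (rule sum.cong) (auto simp: EE_def HH_def)
  finally show ?thesis by simp
qed

lemma hco_split:
  assumes i: "i \<in> {1..n}"
  shows "hco n c a = - (ind (c i = a) - ind (c i = Suc a)) - (\<Sum>k\<in>{1..n} - {i}. ind (c k = a) - ind (c k = Suc a))"
proof -
  have "hco n c a = - (\<Sum>k\<in>{1..n}. ind (c k = a) - ind (c k = Suc a))"
    unfolding hco_def by (simp add: sum_negf[symmetric])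
  also have "(\<Sum>k\<in>{1..n}. ind (c k = a) - ind (c k = Suc a)) = (ind (c i = a) - ind (c i = Suc a)) + (\<Sum>k\<in>{1..n} - {i}. ind (c k = a) - ind (c k = Suc a))"
    by (rule sum.remove[OF _ i]) simp
  finally show ?thesis by simp
qed

lemma dk_FA:
  assumes v: "v \<in> Vsp n L" and i: "i \<in> {1..n}" and nu: "\<And>x. \<nu> x = of_nat x + \<chi> x / 2"
  shows "dk \<kappa> \<nu> n L i (FA n a v) c = FA n a (\<lambda>c. dk \<kappa> \<nu> n L i v c + cst (1/2) * HH a i v c) c
           + cst (1/2) * HC n \<chi> a (EE a i v) c"
proof -
  define E where "E k = EE a k v c" for k
  define h where "h k = ind (c k = a) - ind (c k = Suc a)" for k
  define R where "R p q = cst (1/2) * (cst (h p) * E q - cst (h q) * E p)" for p q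
  define X where "X = (if c i = a then cst (\<nu> a - \<nu> (Suc a)) * v (c(i := Suc a)) else 0)"
  define C where "C = cst (of_nat n / (2 * of_nat L) - 1/2)"
  have s1: "(\<Sum>j\<in>{i<..n}. DDc j i (FA n a v) c + rr i j (FA n a v) c)
      = (\<Sum>j\<in>{i<..n}. FA n a (DDc j i v) c + FA n a (rr i j v) c) + (\<Sum>j\<in>{i<..n}. R i j)"
  proof -
    have "(\<Sum>j\<in>{i<..n}. DDc j i (FA n a v) c + rr i j (FA n a v) c)
      = (\<Sum>j\<in>{i<..n}. (FA n a (DDc j i v) c + FA n a (rr i j v) c) + R i j)"
    proof (rule sum.cong[OF refl])
      fix j assume j: "j \<in> {i<..n}"
      then have j1: "j \<in> {1..n}" "j \<noteq> i" "i \<noteq> j" using i by auto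
      show "DDc j i (FA n a v) c + rr i j (FA n a v) c = (FA n a (DDc j i v) c + FA n a (rr i j v) c) + R i j"
        using FA_DDc[OF v j1(1) i j1(2)] FA_rr[OF i j1(1) j1(3), of a v c]
        by (simp add: R_def h_def E_def add.assoc)
    qed
    then show ?thesis by (simp add: sum.distrib)
  qed
  have s2: "(\<Sum>j\<in>{1..<i}. DDc i j (FA n a v) c + rr j i (FA n a v) c)
      = (\<Sum>j\<in>{1..<i}. FA n a (DDc i j v) c + FA n a (rr j i v) c) + (\<Sum>j\<in>{1..<i}. R j i)"
  proof -
    have "(\<Sum>j\<in>{1..<i}. DDc i j (FA n a v) c + rr j i (FA n a v) c)
      = (\<Sum>j\<in>{1..<i}. (FA n a (DDc i j v) c + FA n a (rr j i v) c) + R j i)"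
    proof (rule sum.cong[OF refl])
      fix j assume j: "j \<in> {1..<i}"
      then have j1: "j \<in> {1..n}" "i \<noteq> j" "j \<noteq> i" using i by auto
      show "DDc i j (FA n a v) c + rr j i (FA n a v) c = (FA n a (DDc i j v) c + FA n a (rr j i v) c) + R j i"
        using FA_DDc[OF v i j1(1) j1(2)] FA_rr[OF j1(1) i j1(3), of a v c]
        by (simp add: R_def h_def E_def add.assoc)
    qed
    then show ?thesis by (simp add: sum.distrib)
  qed
  have lhs: "dk \<kappa> \<nu> n L i (FA n a v) c
     = FA n a (\<lambda>c. cst \<kappa> * euler i (v c)) c + FA n a (\<lambda>c. cst (\<nu> (c i)) * v c) c + C * FA n a v c
       + (\<Sum>j\<in>{i<..n}. FA n a (DDc j i v) c + FA n a (rr i j v) c)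
       - (\<Sum>j\<in>{1..<i}. FA n a (DDc i j v) c + FA n a (rr j i v) c)
       + (X + (\<Sum>j\<in>{i<..n}. R i j) - (\<Sum>j\<in>{1..<i}. R j i))"
    unfolding dk_def s1 s2 FA_euler FA_nu[OF i] X_def C_def by (simp add: algebra_simps)
  have rhs: "FA n a (\<lambda>c. dk \<kappa> \<nu> n L i v c + cst (1/2) * HH a i v c) c
     = FA n a (\<lambda>c. cst \<kappa> * euler i (v c)) c + FA n a (\<lambda>c. cst (\<nu> (c i)) * v c) c + C * FA n a v c
       + (\<Sum>j\<in>{i<..n}. FA n a (DDc j i v) c + FA n a (rr i j v) c)
       - (\<Sum>j\<in>{1..<i}. FA n a (DDc i j v) c + FA n a (rr j i v) c)
       + cst (1/2) * FA n a (HH a i v) c"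
    unfolding dk_def C_def by (simp add: FA_add FA_diff FA_sum FA_cmul)
  have Ranti: "R j i = - R i j" for j by (simp add: R_def algebra_simps)
  have Rsum: "(\<Sum>j\<in>{i<..n}. R i j) - (\<Sum>j\<in>{1..<i}. R j i) = (\<Sum>j\<in>{1..n} - {i}. R i j)"
    unfolding sum_K_split[OF i] Ranti by (simp add: sum_negf)
  have Rsum2: "(\<Sum>j\<in>{1..n} - {i}. R i j) = cst (1/2) * (\<Sum>j\<in>{1..n} - {i}. cst (h i) * E j)
        - cst (1/2) * cst (\<Sum>j\<in>{1..n} - {i}. h j) * E i"
    by (simp add: R_def sum_subtractf sum_distrib_left sum_distrib_right cst_sum algebra_simps)
  have hE: "cst (h i) * E i = E i"
    by (cases "c i = a") (simp_all add: h_def E_def EE_def ind_def)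
  have Xe: "X = (-1 - cst (1/2) * cst (\<chi> (Suc a) - \<chi> a)) * E i"
  proof -
    have e: "\<nu> a - \<nu> (Suc a) = -1 - (1/2) * (\<chi> (Suc a) - \<chi> a)" by (simp add: nu algebra_simps)
    have "cst (-1 - (1/2) * (\<chi> (Suc a) - \<chi> a)) = -1 - cst (1/2) * cst (\<chi> (Suc a) - \<chi> a)"
      by (simp only: cst_diff cst_mult cst_m1)
    then have "cst (\<nu> a - \<nu> (Suc a)) = -1 - cst (1/2) * cst (\<chi> (Suc a) - \<chi> a)"
      by (simp only: e)
    then show ?thesis by (simp add: X_def E_def EE_def)
  qed
  have HCe: "HC n \<chi> a (EE a i v) c = (- cst (h i) - cst (\<Sum>j\<in>{1..n} - {i}. h j) - cst (\<chi> (Suc a) - \<chi> a)) * E i"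
    unfolding HC_def hco_split[OF i] E_def h_def by (simp add: cst_diff cst_uminus)
  have FAH: "FA n a (HH a i v) c = (\<Sum>j\<in>{1..n} - {i}. cst (h i) * E j) - E i"
    unfolding FA_HH[OF i] h_def E_def ..
  have corr: "X + (\<Sum>j\<in>{i<..n}. R i j) - (\<Sum>j\<in>{1..<i}. R j i)
       = cst (1/2) * FA n a (HH a i v) c + cst (1/2) * HC n \<chi> a (EE a i v) c"
  proof -
    have "X + (\<Sum>j\<in>{i<..n}. R i j) - (\<Sum>j\<in>{1..<i}. R j i) = X + ((\<Sum>j\<in>{i<..n}. R i j) - (\<Sum>j\<in>{1..<i}. R j i))"
      by (simp add: algebra_simps)
    also have "\<dots> = (-1 - cst (1/2) * cst (\<chi> (Suc a) - \<chi> a)) * E i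
        + cst (1/2) * (\<Sum>j\<in>{1..n} - {i}. cst (h i) * E j) - cst (1/2) * cst (\<Sum>j\<in>{1..n} - {i}. h j) * E i"
      unfolding Rsum Rsum2 Xe by (simp add: algebra_simps)
    also have "\<dots> = cst (1/2) * ((\<Sum>j\<in>{1..n} - {i}. cst (h i) * E j) - E i)
        + cst (1/2) * ((- cst (h i) - cst (\<Sum>j\<in>{1..n} - {i}. h j) - cst (\<chi> (Suc a) - \<chi> a)) * E i)"
      by (rule corr_alg[OF half_half hE])
    finally show ?thesis unfolding FAH HCe .
  qed
  show ?thesis unfolding lhs rhs corr by (simp add: algebra_simps)
qed

lemma F0_euler:
  assumes i: "i \<in> {1..n}"
  shows "cst \<kappa> * euler i (F0 n L v c) = F0 n L (\<lambda>c. cst \<kappa> * euler i (v c)) c - cst \<kappa> * (Zpow i (-1) * E0 L i v c)"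
proof -
  have "cst \<kappa> * euler i (F0 n L v c) = (\<Sum>k\<in>{1..n}. cst \<kappa> * euler i (Zpow k (-1) * E0 L k v c))"
    unfolding F0_def euler_sum sum_distrib_left ..
  also have "\<dots> = F0 n L (\<lambda>c. cst \<kappa> * euler i (v c)) c + (- (cst \<kappa> * (Zpow i (-1) * E0 L i v c)))"
    unfolding F0_def
  proof (rule sum_split1[OF _ i])
    fix k assume "k \<in> {1..n}"
    show "cst \<kappa> * euler i (Zpow k (-1) * E0 L k v c) = Zpow k (-1) * E0 L k (\<lambda>c. cst \<kappa> * euler i (v c)) c
        + (if k = i then - (cst \<kappa> * (Zpow i (-1) * E0 L i v c)) else 0)"
      unfolding euler_Zpow_mult by (auto simp: E0_def cst_def[symmetric] algebra_simps)
  qed simp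
  finally show ?thesis by simp
qed

lemma F0_nu:
  assumes i: "i \<in> {1..n}"
  shows "cst (\<nu> (c i)) * F0 n L v c = F0 n L (\<lambda>c. cst (\<nu> (c i)) * v c) c + cst (\<nu> L - \<nu> 1) * (Zpow i (-1) * E0 L i v c)"
  unfolding F0_def sum_distrib_left
  by (rule sum_split1[OF _ i]) (auto simp: E0_def cst_diff algebra_simps)

lemma F0_sw:
  assumes i: "i \<in> {1..n}" and j: "j \<in> {1..n}"
  shows "F0 n L v (c \<circ> sw i j) = (\<Sum>k\<in>{1..n}. Zpow (sw i j k) (-1) * (if c k = L then v ((c(k := 1)) \<circ> sw i j) else 0))"
proof -
  have "F0 n L v (c \<circ> sw i j) = (\<Sum>k\<in>{1..n}. Zpow (sw i j k) (-1) * E0 L (sw i j k) v (c \<circ> sw i j))"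
    unfolding F0_def by (rule sum_sw_reindex[OF i j, symmetric])
  also have "\<dots> = (\<Sum>k\<in>{1..n}. Zpow (sw i j k) (-1) * (if c k = L then v ((c(k := 1)) \<circ> sw i j) else 0))"
    by (rule sum.cong) (auto simp: E0_def upd_comp_sw)
  finally show ?thesis .
qed

lemma F0_DDc:
  assumes v: "v \<in> Vsp n L" and p: "p \<in> {1..n}" and q: "q \<in> {1..n}" and pq: "p \<noteq> q"
  shows "DDc p q (F0 n L v) c = F0 n L (DDc p q v) c
           + Zpow q (-1) * (E0 L q (Pswap p q v) c - E0 L p (Pswap p q v) c)"
proof -
  have Lv: "\<And>c. v c \<in> Lp n" using v by simp
  have "DDc p q (F0 n L v) c = (\<Sum>k\<in>{1..n}. ddiv p q (Zpow (sw p q k) (-1) * (if c k = L then v ((c(k := 1)) \<circ> sw p q) else 0)))"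
  proof -
    have Lt: "Zpow (sw p q k) (-1) * (if c k = L then v ((c(k := 1)) \<circ> sw p q) else 0) \<in> Lp n"
      if k: "k \<in> {1..n}" for k
    proof (rule Lp_mult)
      show "Zpow (sw p q k) (-1) \<in> Lp n" using sw_in[OF p q] k by simp
    qed (simp add: Lv)
    show ?thesis unfolding DDc_def F0_sw[OF p q] by (rule ddiv_sum[OF p q pq Lt])
  qed
  also have "\<dots> = (\<Sum>k\<in>{1..n}. Zpow k (-1) * DDc p q v (c(k := 1)) * (if c k = L then 1 else 0))
       + (if c q = L then Zpow q (-1) * v ((c(q := 1)) \<circ> sw p q) else 0)
       + (if c p = L then - (Zpow q (-1) * v ((c(p := 1)) \<circ> sw p q)) else 0)"
  proof (rule sum_split2[OF _ q p pq[symmetric]])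
    fix k assume k: "k \<in> {1..n}"
    show "ddiv p q (Zpow (sw p q k) (-1) * (if c k = L then v ((c(k := 1)) \<circ> sw p q) else 0))
      = Zpow k (-1) * DDc p q v (c(k := 1)) * (if c k = L then 1 else 0)
        + (if k = q then (if c q = L then Zpow q (-1) * v ((c(q := 1)) \<circ> sw p q) else 0) else 0)
        + (if k = p then (if c p = L then - (Zpow q (-1) * v ((c(p := 1)) \<circ> sw p q)) else 0) else 0)"
      using pq by (cases "c k = L") (auto simp: ddiv_Zpow[OF p q pq Lv] DDc_def ddiv_zero[OF pq])
  qed simp
  also have "(\<Sum>k\<in>{1..n}. Zpow k (-1) * DDc p q v (c(k := 1)) * (if c k = L then 1 else 0)) = F0 n L (DDc p q v) c"
    unfolding F0_def by (rule sum.cong) (auto simp: E0_def)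
  finally show ?thesis
    by (simp add: E0_def Pswap_def algebra_simps)
qed

lemma F0_rr:
  assumes i: "i \<in> {1..n}" and j: "j \<in> {1..n}" and ij: "i \<noteq> j" and c: "c \<in> cols n L" and L: "2 \<le> L"
  shows "rr i j (F0 n L v) c = F0 n L (rr i j v) c
     + Zpow i (-1) * (E0 L j (Pswap i j v) c - E0 L i (Pswap i j v) c)
     - cst (1/2) * (Zpow i (-1) * (cst (ind (c j = L) - ind (c j = 1)) * E0 L i v c))
     + cst (1/2) * (Zpow j (-1) * (cst (ind (c i = L) - ind (c i = 1)) * E0 L j v c))"
proof -
  define T where "T k = (if c i = c j then cst (1/2) * (Zpow k (-1) * E0 L k v c) else 0)
      + (if c i < c j then Zpow (sw i j k) (-1) * (if c k = L then v ((c(k := 1)) \<circ> sw i j) else 0) else 0)" for k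
  define S where "S k = Zpow k (-1) * E0 L k (rr i j v) c" for k
  have LHS: "rr i j (F0 n L v) c = sum T {1..n}"
    unfolding rr_def F0_sw[OF i j] T_def sum.distrib
    by (simp add: F0_def sum_distrib_left sum.If_cases)
  have RHS: "F0 n L (rr i j v) c = sum S {1..n}"
    unfolding F0_def S_def ..
  have ci: "c i \<in> {1..L}" and cj: "c j \<in> {1..L}" using cols_val[OF c i] cols_val[OF c j] by auto
  have f1: "c(i:=Suc 0) \<circ> sw i j = c(i:=Suc 0)" if "c j = Suc 0"
    using that by (auto simp: fun_eq_iff sw_def)
  have f2: "c(j:=Suc 0) \<circ> sw i j = c(i:=Suc 0)" if "c i = L" "c j = L"
    using that by (auto simp: fun_eq_iff sw_def)
  have hh2: "2 * cst (1/2) = 1" unfolding mult_2 by (rule half_half)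
  have hh3: "2 * (cst (1/2) * X) = X" for X using hh2 by (simp add: mult.assoc[symmetric])
  have swi: "sw i j i = j" and swj: "sw i j j = i" by (simp_all add: sw_def)
  have key: "T k = S k + (if k = i then T i - S i else 0) + (if k = j then T j - S j else 0)"
    if k: "k \<in> {1..n}" for k
  proof (cases "k = i \<or> k = j")
    case True then show ?thesis using ij by auto
  next
    case False
    then have ki: "k \<noteq> i" "i \<noteq> k" "k \<noteq> j" "j \<noteq> k" by auto
    then have sk: "sw i j k = k" by (simp add: sw_def)
    have "T k = S k"
      using ki sk by (cases "c k = L") (simp_all add: T_def S_def E0_def rr_def upd_comp_sw)
    then show ?thesis using False by simp
  qed
  have sums: "sum T {1..n} = sum S {1..n} + (T i - S i) + (T j - S j)"
    by (rule sum_split2[OF _ i j ij key]) simp_all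
  have fin: "(T i - S i) + (T j - S j) = Zpow i (-1) * (E0 L j (Pswap i j v) c - E0 L i (Pswap i j v) c)
     - cst (1/2) * (Zpow i (-1) * (cst (ind (c j = L) - ind (c j = 1)) * E0 L i v c))
     + cst (1/2) * (Zpow j (-1) * (cst (ind (c i = L) - ind (c i = 1)) * E0 L j v c))"
  proof -
    consider "c i = L" "c j = L" | "c i = L" "c j = 1" | "c i = L" "c j \<noteq> L" "c j \<noteq> 1"
      | "c i \<noteq> L" "c j = L" "c i = 1" | "c i \<noteq> L" "c j = L" "c i \<noteq> 1" | "c i \<noteq> L" "c j \<noteq> L" using L by auto
    then show ?thesis
    proof cases
      case 1
      then show ?thesis using ij L ci cj
        by (simp add: T_def S_def E0_def rr_def f2 ind_def Pswap_def swi swj hh2 hh3 algebra_simps)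
    next
      case 2
      then show ?thesis using ij L ci cj
        by (simp add: T_def S_def E0_def rr_def f1 ind_def Pswap_def swi swj hh2 hh3 algebra_simps)
    next
      case 3
      then show ?thesis using ij L ci cj
        by (simp add: T_def S_def E0_def rr_def ind_def Pswap_def swi swj algebra_simps)
    next
      case 4
      then show ?thesis using ij L ci cj
        by (simp add: T_def S_def E0_def rr_def ind_def Pswap_def swi swj hh2 hh3 algebra_simps)
    next
      case 5
      then show ?thesis using ij L ci cj
        by (simp add: T_def S_def E0_def rr_def ind_def Pswap_def swi swj algebra_simps)
    next
      case 6
      then show ?thesis using ij L ci cj
        by (simp add: T_def S_def E0_def rr_def ind_def Pswap_def swi swj algebra_simps)
    qed
  qed
  show ?thesis unfolding LHS RHS sums using fin by (simp add: algebra_simps)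
qed

definition GG :: "nat \<Rightarrow> nat \<Rightarrow> vect \<Rightarrow> vect" where
  "GG L i v = (\<lambda>c. cst (ind (c i = L) - ind (c i = 1)) * v c)"

lemma F0_add: "F0 n L (\<lambda>c. x c + y c) c = F0 n L x c + F0 n L y c"
  unfolding F0_def E0_def by (auto simp add: sum.distrib[symmetric] algebra_simps intro!: sum.cong)

lemma F0_diff: "F0 n L (\<lambda>c. x c - y c) c = F0 n L x c - F0 n L y c"
  unfolding F0_def E0_def by (auto simp add: sum_subtractf[symmetric] algebra_simps intro!: sum.cong)

lemma F0_sum: "F0 n L (\<lambda>c. \<Sum>j\<in>J. f j c) c = (\<Sum>j\<in>J. F0 n L (f j) c)"
  unfolding F0_def E0_def by (subst sum.swap) (auto simp: sum_distrib_left intro!: sum.cong)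

lemma F0_cmul: "F0 n L (\<lambda>c. cst s * x c) c = cst s * F0 n L x c"
  unfolding F0_def E0_def by (auto simp add: sum_distrib_left algebra_simps intro!: sum.cong)

lemma Pswap_comm: "Pswap j i = Pswap i j"
  by (simp add: Pswap_def sw_comm fun_eq_iff)

lemma F0_GG:
  assumes i: "i \<in> {1..n}" and L: "2 \<le> L"
  shows "F0 n L (GG L i v) c = (\<Sum>k\<in>{1..n} - {i}. cst (ind (c i = L) - ind (c i = 1)) * (Zpow k (-1) * E0 L k v c))
            - Zpow i (-1) * E0 L i v c"
proof -
  have "F0 n L (GG L i v) c = Zpow i (-1) * E0 L i (GG L i v) c + (\<Sum>k\<in>{1..n} - {i}. Zpow k (-1) * E0 L k (GG L i v) c)"
    unfolding F0_def by (rule sum.remove[OF _ i]) simp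
  also have "Zpow i (-1) * E0 L i (GG L i v) c = - (Zpow i (-1) * E0 L i v c)"
    using L by (simp add: E0_def GG_def ind_def)
  also have "(\<Sum>k\<in>{1..n} - {i}. Zpow k (-1) * E0 L k (GG L i v) c)
      = (\<Sum>k\<in>{1..n} - {i}. cst (ind (c i = L) - ind (c i = 1)) * (Zpow k (-1) * E0 L k v c))"
    by (rule sum.cong) (auto simp: E0_def GG_def)
  finally show ?thesis by simp
qed

lemma hco_telescope:
  assumes L: "1 \<le> L"
  shows "(\<Sum>a\<in>{1..L-1}. hco n c a) = (\<Sum>k\<in>{1..n}. ind (c k = L) - ind (c k = 1))"
proof -
  have "(\<Sum>a\<in>{1..L-1}. hco n c a) = (\<Sum>k\<in>{1..n}. \<Sum>a\<in>{1..L-1}. ind (c k = Suc a) - ind (c k = a))"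
    unfolding hco_def by (rule sum.swap)
  also have "\<dots> = (\<Sum>k\<in>{1..n}. ind (c k = L) - ind (c k = 1))"
  proof (rule sum.cong[OF refl])
    fix k
    have "(\<Sum>a\<in>{1..L-1}. ind (c k = Suc a) - ind (c k = a)) = ind (c k = Suc (L - 1)) - ind (c k = 1)"
      by (rule sum_Suc_diff[of 1 "L - 1" "\<lambda>a. ind (c k = a)"]) simp
    then show "(\<Sum>a\<in>{1..L-1}. ind (c k = Suc a) - ind (c k = a)) = ind (c k = L) - ind (c k = 1)"
      using L by simp
  qed
  finally show ?thesis .
qed

lemma chi_telescope:
  assumes L: "1 \<le> L"
  shows "(\<Sum>a\<in>{1..L-1}. \<chi> (Suc a) - \<chi> a) = \<chi> L - (\<chi> 1 :: complex)"
  using sum_Suc_diff[of 1 "L - 1" \<chi>] L by simp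

lemma HC_sum:
  assumes L: "1 \<le> L"
  shows "(\<Sum>a\<in>{1..L-1}. HC n \<chi> a w c) = cst ((\<Sum>k\<in>{1..n}. ind (c k = L) - ind (c k = 1)) - (\<chi> L - \<chi> 1)) * w c"
proof -
  have "(\<Sum>a\<in>{1..L-1}. HC n \<chi> a w c) = cst (\<Sum>a\<in>{1..L-1}. hco n c a - (\<chi> (Suc a) - \<chi> a)) * w c"
    unfolding HC_def by (simp add: cst_sum sum_distrib_right)
  also have "(\<Sum>a\<in>{1..L-1}. hco n c a - (\<chi> (Suc a) - \<chi> a)) = (\<Sum>k\<in>{1..n}. ind (c k = L) - ind (c k = 1)) - (\<chi> L - \<chi> 1)"
    by (subst sum_subtractf) (simp only: hco_telescope[OF L] chi_telescope[OF L])
  finally show ?thesis .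
qed

lemma corr_alg2:
  fixes h1 gi P A B d :: "'a::comm_ring_1"
  assumes hh: "h1 + h1 = 1" and gP: "gi * P = P"
  shows "(-1 + h1 * d) * P - h1 * B * P + h1 * A = h1 * (A - P) - h1 * ((gi + B - d) * P)"
proof -
  have "h1 * (A - P) - h1 * ((gi + B - d) * P) = h1 * A - h1 * P - h1 * (gi * P) - h1 * B * P + h1 * d * P"
    by (simp add: algebra_simps)
  also have "\<dots> = h1 * A - (h1 + h1) * P - h1 * B * P + h1 * d * P"
    unfolding gP by (simp add: algebra_simps)
  also have "\<dots> = (-1 + h1 * d) * P - h1 * B * P + h1 * A"
    unfolding hh by (simp add: algebra_simps)
  finally show ?thesis by simp
qed

lemma dk_F0:
  assumes v: "v \<in> Vsp n L" and i: "i \<in> {1..n}" and c: "c \<in> cols n L" and L: "2 \<le> L"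
    and nu: "\<And>x. \<nu> x = of_nat x + \<chi> x / 2" and ka: "\<kappa> = of_nat L"
  shows "dk \<kappa> \<nu> n L i (F0 n L v) c = F0 n L (\<lambda>c. dk \<kappa> \<nu> n L i v c + cst (1/2) * GG L i v c) c
           - cst (1/2) * (\<Sum>a\<in>{1..L-1}. HC n \<chi> a (\<lambda>c. Zpow i (-1) * E0 L i v c) c)"
proof -
  define E where "E k = E0 L k v c" for k
  define Z where "Z k = Zpow k (-1)" for k
  define g where "g k = ind (c k = L) - ind (c k = 1)" for k
  define Q where "Q j = - (cst (1/2) * (Z i * (cst (g j) * E i))) + cst (1/2) * (Z j * (cst (g i) * E j))" for j
  define X where "X = - (cst \<kappa> * (Z i * E i)) + cst (\<nu> L - \<nu> 1) * (Z i * E i)"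
  define C where "C = cst (of_nat n / (2 * of_nat L) - 1/2)"
  have s1: "(\<Sum>j\<in>{i<..n}. DDc j i (F0 n L v) c + rr i j (F0 n L v) c)
      = (\<Sum>j\<in>{i<..n}. F0 n L (DDc j i v) c + F0 n L (rr i j v) c) + (\<Sum>j\<in>{i<..n}. Q j)"
  proof -
    have "(\<Sum>j\<in>{i<..n}. DDc j i (F0 n L v) c + rr i j (F0 n L v) c)
      = (\<Sum>j\<in>{i<..n}. (F0 n L (DDc j i v) c + F0 n L (rr i j v) c) + Q j)"
    proof (rule sum.cong[OF refl])
      fix j assume j: "j \<in> {i<..n}"
      then have j1: "j \<in> {1..n}" "j \<noteq> i" "i \<noteq> j" using i by auto
      show "DDc j i (F0 n L v) c + rr i j (F0 n L v) c = (F0 n L (DDc j i v) c + F0 n L (rr i j v) c) + Q j"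
        unfolding F0_DDc[OF v j1(1) i j1(2), of c] F0_rr[OF i j1(1) j1(3) c L, of v]
        by (simp add: Q_def g_def E_def Z_def Pswap_comm[of j i] algebra_simps)
    qed
    then show ?thesis by (simp add: sum.distrib)
  qed
  have s2: "(\<Sum>j\<in>{1..<i}. DDc i j (F0 n L v) c + rr j i (F0 n L v) c)
      = (\<Sum>j\<in>{1..<i}. F0 n L (DDc i j v) c + F0 n L (rr j i v) c) - (\<Sum>j\<in>{1..<i}. Q j)"
  proof -
    have "(\<Sum>j\<in>{1..<i}. DDc i j (F0 n L v) c + rr j i (F0 n L v) c)
      = (\<Sum>j\<in>{1..<i}. (F0 n L (DDc i j v) c + F0 n L (rr j i v) c) - Q j)"
    proof (rule sum.cong[OF refl])
      fix j assume j: "j \<in> {1..<i}"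
      then have j1: "j \<in> {1..n}" "i \<noteq> j" "j \<noteq> i" using i by auto
      show "DDc i j (F0 n L v) c + rr j i (F0 n L v) c = (F0 n L (DDc i j v) c + F0 n L (rr j i v) c) - Q j"
        unfolding F0_DDc[OF v i j1(1) j1(2), of c] F0_rr[OF j1(1) i j1(3) c L, of v]
        by (simp add: Q_def g_def E_def Z_def Pswap_comm[of j i] algebra_simps)
    qed
    then show ?thesis by (simp add: sum_subtractf)
  qed
  have lhs: "dk \<kappa> \<nu> n L i (F0 n L v) c
     = F0 n L (\<lambda>c. cst \<kappa> * euler i (v c)) c + F0 n L (\<lambda>c. cst (\<nu> (c i)) * v c) c + C * F0 n L v c
       + (\<Sum>j\<in>{i<..n}. F0 n L (DDc j i v) c + F0 n L (rr i j v) c)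
       - (\<Sum>j\<in>{1..<i}. F0 n L (DDc i j v) c + F0 n L (rr j i v) c)
       + (X + (\<Sum>j\<in>{i<..n}. Q j) + (\<Sum>j\<in>{1..<i}. Q j))"
    unfolding dk_def s1 s2 F0_euler[OF i] F0_nu[OF i] X_def C_def E_def Z_def by (simp add: algebra_simps)
  have rhs: "F0 n L (\<lambda>c. dk \<kappa> \<nu> n L i v c + cst (1/2) * GG L i v c) c
     = F0 n L (\<lambda>c. cst \<kappa> * euler i (v c)) c + F0 n L (\<lambda>c. cst (\<nu> (c i)) * v c) c + C * F0 n L v c
       + (\<Sum>j\<in>{i<..n}. F0 n L (DDc j i v) c + F0 n L (rr i j v) c)
       - (\<Sum>j\<in>{1..<i}. F0 n L (DDc i j v) c + F0 n L (rr j i v) c)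
       + cst (1/2) * F0 n L (GG L i v) c"
    unfolding dk_def C_def by (simp add: F0_add F0_diff F0_sum F0_cmul)
  have Qsum: "(\<Sum>j\<in>{i<..n}. Q j) + (\<Sum>j\<in>{1..<i}. Q j)
      = - (cst (1/2) * cst (\<Sum>j\<in>{1..n} - {i}. g j) * (Z i * E i)) + cst (1/2) * (\<Sum>j\<in>{1..n} - {i}. cst (g i) * (Z j * E j))"
    unfolding sum_K_split[OF i, symmetric]
    by (simp add: Q_def sum.distrib sum_subtractf sum_negf sum_distrib_left sum_distrib_right cst_sum algebra_simps)
  have gE: "cst (g i) * (Z i * E i) = Z i * E i"
    using L by (cases "c i = L") (simp_all add: g_def E_def E0_def ind_def)
  have Xe: "X = (-1 + cst (1/2) * cst (\<chi> L - \<chi> 1)) * (Z i * E i)"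
  proof -
    have e: "- \<kappa> + (\<nu> L - \<nu> 1) = -1 + (1/2) * (\<chi> L - \<chi> 1)" by (simp add: nu ka algebra_simps)
    have "cst (-1 + (1/2) * (\<chi> L - \<chi> 1)) = -1 + cst (1/2) * cst (\<chi> L - \<chi> 1)"
      by (simp only: cst_add cst_mult cst_m1)
    then have e2: "- cst \<kappa> + cst (\<nu> L - \<nu> 1) = -1 + cst (1/2) * cst (\<chi> L - \<chi> 1)"
      by (simp only: e cst_add[symmetric] cst_uminus[symmetric])
    have X2: "X = (- cst \<kappa> + cst (\<nu> L - \<nu> 1)) * (Z i * E i)" unfolding X_def by (simp add: algebra_simps)
    show ?thesis by (simp only: X2 e2)
  qed
  have HCe: "(\<Sum>a\<in>{1..L-1}. HC n \<chi> a (\<lambda>c. Zpow i (-1) * E0 L i v c) c)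
      = (cst (g i) + cst (\<Sum>j\<in>{1..n} - {i}. g j) - cst (\<chi> L - \<chi> 1)) * (Z i * E i)"
  proof -
    have se: "(\<Sum>k\<in>{1..n}. ind (c k = L) - ind (c k = 1)) = g i + (\<Sum>j\<in>{1..n} - {i}. g j)"
      unfolding g_def by (rule sum.remove[OF _ i]) simp
    have L1: "1 \<le> L" using L by simp
    have "(\<Sum>a\<in>{1..L-1}. HC n \<chi> a (\<lambda>c. Zpow i (-1) * E0 L i v c) c)
        = cst ((\<Sum>k\<in>{1..n}. ind (c k = L) - ind (c k = 1)) - (\<chi> L - \<chi> 1)) * (Zpow i (-1) * E0 L i v c)"
      by (rule HC_sum[OF L1])
    also have "\<dots> = (cst (g i) + cst (\<Sum>j\<in>{1..n} - {i}. g j) - cst (\<chi> L - \<chi> 1)) * (Z i * E i)"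
      unfolding se by (simp add: cst_diff cst_add Z_def E_def)
    finally show ?thesis .
  qed
  have FGe: "F0 n L (GG L i v) c = (\<Sum>j\<in>{1..n} - {i}. cst (g i) * (Z j * E j)) - Z i * E i"
    unfolding F0_GG[OF i L] g_def Z_def E_def ..
  have corr: "X + (\<Sum>j\<in>{i<..n}. Q j) + (\<Sum>j\<in>{1..<i}. Q j)
      = cst (1/2) * F0 n L (GG L i v) c - cst (1/2) * (\<Sum>a\<in>{1..L-1}. HC n \<chi> a (\<lambda>c. Zpow i (-1) * E0 L i v c) c)"
  proof -
    have "X + (\<Sum>j\<in>{i<..n}. Q j) + (\<Sum>j\<in>{1..<i}. Q j) = X + ((\<Sum>j\<in>{i<..n}. Q j) + (\<Sum>j\<in>{1..<i}. Q j))"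
      by (simp add: algebra_simps)
    also have "\<dots> = (-1 + cst (1/2) * cst (\<chi> L - \<chi> 1)) * (Z i * E i)
        - cst (1/2) * cst (\<Sum>j\<in>{1..n} - {i}. g j) * (Z i * E i) + cst (1/2) * (\<Sum>j\<in>{1..n} - {i}. cst (g i) * (Z j * E j))"
      unfolding Qsum Xe by (simp add: algebra_simps)
    also have "\<dots> = cst (1/2) * ((\<Sum>j\<in>{1..n} - {i}. cst (g i) * (Z j * E j)) - Z i * E i)
        - cst (1/2) * ((cst (g i) + cst (\<Sum>j\<in>{1..n} - {i}. g j) - cst (\<chi> L - \<chi> 1)) * (Z i * E i))"
      by (rule corr_alg2[OF half_half gE])
    finally show ?thesis unfolding FGe HCe .
  qed
  show ?thesis unfolding lhs rhs corr by (simp add: algebra_simps)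
qed

lemma hco_sw:
  assumes i: "i \<in> {1..n}" and j: "j \<in> {1..n}"
  shows "hco n (c \<circ> sw i j) a = hco n c a"
  unfolding hco_def o_def by (rule sum_sw_reindex[OF i j, of "\<lambda>k. ind (c k = Suc a) - ind (c k = a)"])

lemma dk_HC:
  assumes v: "v \<in> Vsp n L" and i: "i \<in> {1..n}"
  shows "dk \<kappa> \<nu> n L i (HC n \<chi> a v) c = HC n \<chi> a (dk \<kappa> \<nu> n L i v) c"
proof -
  define s where "s = cst (hco n c a - (\<chi> (Suc a) - \<chi> a))"
  have Lv: "\<And>c. v c \<in> Lp n" using v by simp
  have D1: "DDc j i (HC n \<chi> a v) c + rr i j (HC n \<chi> a v) c = s * (DDc j i v c + rr i j v c)"
    if j: "j \<in> {i<..n}" for j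
  proof -
    have j1: "j \<in> {1..n}" "j \<noteq> i" "i \<noteq> j" using j i by auto
    have "DDc j i (HC n \<chi> a v) c = s * DDc j i v c"
      unfolding DDc_def HC_def s_def hco_sw[OF j1(1) i] cst_def by (rule ddiv_single0[OF j1(1) i j1(2) Lv])
    moreover have "rr i j (HC n \<chi> a v) c = s * rr i j v c"
      by (simp add: rr_def HC_def s_def hco_sw[OF i j1(1)] algebra_simps)
    ultimately show ?thesis by (simp add: algebra_simps)
  qed
  have D2: "DDc i j (HC n \<chi> a v) c + rr j i (HC n \<chi> a v) c = s * (DDc i j v c + rr j i v c)"
    if j: "j \<in> {1..<i}" for j
  proof -
    have j1: "j \<in> {1..n}" "j \<noteq> i" "i \<noteq> j" using j i by auto
    have "DDc i j (HC n \<chi> a v) c = s * DDc i j v c"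
      unfolding DDc_def HC_def s_def hco_sw[OF i j1(1)] cst_def by (rule ddiv_single0[OF i j1(1) j1(3) Lv])
    moreover have "rr j i (HC n \<chi> a v) c = s * rr j i v c"
      by (simp add: rr_def HC_def s_def hco_sw[OF j1(1) i] algebra_simps)
    ultimately show ?thesis by (simp add: algebra_simps)
  qed
  have "dk \<kappa> \<nu> n L i (HC n \<chi> a v) c = cst \<kappa> * euler i (s * v c) + cst (\<nu> (c i)) * (s * v c)
     + cst (of_nat n / (2 * of_nat L) - 1/2) * (s * v c)
     + (\<Sum>j\<in>{i<..n}. s * (DDc j i v c + rr i j v c)) - (\<Sum>j\<in>{1..<i}. s * (DDc i j v c + rr j i v c))"
    unfolding dk_def using D1 D2 by (simp add: HC_def s_def)
  also have "\<dots> = HC n \<chi> a (dk \<kappa> \<nu> n L i v) c"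
    unfolding dk_def HC_def s_def[symmetric] s_def cst_def euler_single0_mult
    by (simp add: sum_distrib_left algebra_simps)
  finally show ?thesis .
qed

lemma dk_add:
  assumes v: "v \<in> Vsp n L" and w: "w \<in> Vsp n L" and i: "i \<in> {1..n}"
  shows "dk \<kappa> \<nu> n L i (\<lambda>c. v c + w c) c = dk \<kappa> \<nu> n L i v c + dk \<kappa> \<nu> n L i w c"
proof -
  have Lv: "\<And>c. v c \<in> Lp n" and Lw: "\<And>c. w c \<in> Lp n" using v w by simp_all
  have D1: "DDc j i (\<lambda>c. v c + w c) c + rr i j (\<lambda>c. v c + w c) c = (DDc j i v c + rr i j v c) + (DDc j i w c + rr i j w c)"
    if j: "j \<in> {i<..n}" for j
  proof -
    have j1: "j \<in> {1..n}" "j \<noteq> i" using j i by auto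
    show ?thesis unfolding DDc_def rr_def ddiv_add[OF j1(1) i j1(2) Lv Lw] by (simp add: algebra_simps)
  qed
  have D2: "DDc i j (\<lambda>c. v c + w c) c + rr j i (\<lambda>c. v c + w c) c = (DDc i j v c + rr j i v c) + (DDc i j w c + rr j i w c)"
    if j: "j \<in> {1..<i}" for j
  proof -
    have j1: "j \<in> {1..n}" "i \<noteq> j" using j i by auto
    show ?thesis unfolding DDc_def rr_def ddiv_add[OF i j1(1) j1(2) Lv Lw] by (simp add: algebra_simps)
  qed
  show ?thesis unfolding dk_def using D1 D2
    by (simp add: euler_add sum.distrib algebra_simps)
qed

lemma dk_scale:
  assumes v: "v \<in> Vsp n L" and i: "i \<in> {1..n}"
  shows "dk \<kappa> \<nu> n L i (\<lambda>c. cst s * v c) c = cst s * dk \<kappa> \<nu> n L i v c"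
proof -
  have Lv: "\<And>c. v c \<in> Lp n" using v by simp
  have D1: "DDc j i (\<lambda>c. cst s * v c) c + rr i j (\<lambda>c. cst s * v c) c = cst s * (DDc j i v c + rr i j v c)"
    if j: "j \<in> {i<..n}" for j
  proof -
    have j1: "j \<in> {1..n}" "j \<noteq> i" using j i by auto
    show ?thesis unfolding DDc_def rr_def cst_def ddiv_single0[OF j1(1) i j1(2) Lv] by (simp add: algebra_simps)
  qed
  have D2: "DDc i j (\<lambda>c. cst s * v c) c + rr j i (\<lambda>c. cst s * v c) c = cst s * (DDc i j v c + rr j i v c)"
    if j: "j \<in> {1..<i}" for j
  proof -
    have j1: "j \<in> {1..n}" "i \<noteq> j" using j i by auto
    show ?thesis unfolding DDc_def rr_def cst_def ddiv_single0[OF i j1(1) j1(2) Lv] by (simp add: algebra_simps)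
  qed
  have S1: "(\<Sum>j\<in>{i<..n}. DDc j i (\<lambda>c. cst s * v c) c + rr i j (\<lambda>c. cst s * v c) c) = cst s * (\<Sum>j\<in>{i<..n}. DDc j i v c + rr i j v c)"
    unfolding sum_distrib_left using D1 by (rule sum.cong[OF refl])
  have S2: "(\<Sum>j\<in>{1..<i}. DDc i j (\<lambda>c. cst s * v c) c + rr j i (\<lambda>c. cst s * v c) c) = cst s * (\<Sum>j\<in>{1..<i}. DDc i j v c + rr j i v c)"
    unfolding sum_distrib_left using D2 by (rule sum.cong[OF refl])
  show ?thesis unfolding dk_def unfolding S1 S2 unfolding cst_def euler_single0_mult
    by (simp add: algebra_simps)
qed

lemma EE_Eu: "EE a i v = Eu a (Suc a) i v"
  by (simp add: EE_def Eu_def fun_eq_iff)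

lemma E0_Eu: "E0 L i v = Eu L 1 i v"
  by (simp add: E0_def Eu_def fun_eq_iff)

lemma Vsp_EE [simp]: "v \<in> Vsp n L \<Longrightarrow> a \<in> {1..L} \<Longrightarrow> Suc a \<in> {1..L} \<Longrightarrow> i \<in> {1..n} \<Longrightarrow> EE a i v \<in> Vsp n L"
  unfolding EE_Eu by (rule Vsp_Eu)

lemma Vsp_E0 [simp]: "v \<in> Vsp n L \<Longrightarrow> 1 \<le> L \<Longrightarrow> i \<in> {1..n} \<Longrightarrow> E0 L i v \<in> Vsp n L"
  unfolding E0_Eu by (rule Vsp_Eu) auto

lemma Vsp_FA [simp]: "v \<in> Vsp n L \<Longrightarrow> a \<in> {1..L} \<Longrightarrow> Suc a \<in> {1..L} \<Longrightarrow> FA n a v \<in> Vsp n L"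
  unfolding FA_def by (rule Vsp_sum) simp

lemma Vsp_F0 [simp]: "v \<in> Vsp n L \<Longrightarrow> 1 \<le> L \<Longrightarrow> F0 n L v \<in> Vsp n L"
  unfolding F0_def by (rule Vsp_sum, rule Vsp_mult) simp_all

lemma Vsp_HC [simp]: "v \<in> Vsp n L \<Longrightarrow> HC n \<chi> a v \<in> Vsp n L"
  unfolding HC_def by (rule Vsp_mult) simp_all

lemma Vsp_HH [simp]: "v \<in> Vsp n L \<Longrightarrow> HH a i v \<in> Vsp n L"
  unfolding HH_def by (rule Vsp_mult) simp_all

lemma Vsp_GG [simp]: "v \<in> Vsp n L \<Longrightarrow> GG L i v \<in> Vsp n L"
  unfolding GG_def by (rule Vsp_mult) simp_all

lemma Vsp_cmul [simp]: "v \<in> Vsp n L \<Longrightarrow> (\<lambda>c. cst s * v c) \<in> Vsp n L"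
  by (rule Vsp_mult) simp_all

lemma Vsp_nuop [simp]: "v \<in> Vsp n L \<Longrightarrow> i \<in> {1..n} \<Longrightarrow> nuop \<nu> L i v \<in> Vsp n L"
  unfolding nuop_def by (rule Vsp_sum, rule Vsp_mult) simp_all

lemma Vsp_rop [simp]:
  assumes "v \<in> Vsp n L" "i \<in> {1..n}" "j \<in> {1..n}"
  shows "rop L i j v \<in> Vsp n L"
proof -
  have "rop L i j v = (\<lambda>c. (\<lambda>c. Poly_Mapping.single 0 (1/2) * (\<Sum>a\<in>{1..L}. Eu a a i (Eu a a j v) c)) c
       + (\<lambda>c. \<Sum>a\<in>{1..L}. \<Sum>b\<in>{a<..L}. Eu a b i (Eu b a j v) c) c)"
    by (simp add: rop_def)
  also have "\<dots> \<in> Vsp n L"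
  proof (rule Vsp_add)
    have "(\<lambda>c. \<Sum>a\<in>{1..L}. Eu a a i (Eu a a j v) c) \<in> Vsp n L"
      by (rule Vsp_sum) (use assms in simp)
    then show "(\<lambda>c. Poly_Mapping.single 0 (1/2) * (\<Sum>a\<in>{1..L}. Eu a a i (Eu a a j v) c)) \<in> Vsp n L"
      by (rule Vsp_mult) simp
    show "(\<lambda>c. \<Sum>a\<in>{1..L}. \<Sum>b\<in>{a<..L}. Eu a b i (Eu b a j v) c) \<in> Vsp n L"
      by (rule Vsp_sum, rule Vsp_sum) (use assms in auto)
  qed
  finally show ?thesis .
qed

lemma Vsp_DD [simp]:
  "v \<in> Vsp n L \<Longrightarrow> a \<in> {1..n} \<Longrightarrow> b \<in> {1..n} \<Longrightarrow> a \<noteq> b \<Longrightarrow> DD a b v \<in> Vsp n L"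
  unfolding DD_def Pswap_def by (rule Vsp_DDc)

lemma Vsp_dunkl [simp]:
  assumes v: "v \<in> Vsp n L" and i: "i \<in> {1..n}"
  shows "dunkl \<kappa> \<nu> n L i v \<in> Vsp n L"
proof -
  have s1: "(\<lambda>c. \<Sum>j\<in>{i<..n}. DD j i v c + rop L i j v c) \<in> Vsp n L"
    by (rule Vsp_sum, rule Vsp_add) (use v i in auto)
  have s2: "(\<lambda>c. \<Sum>j\<in>{1..<i}. DD i j v c + rop L j i v c) \<in> Vsp n L"
    by (rule Vsp_sum, rule Vsp_add) (use v i in auto)
  have e1: "(\<lambda>c. Poly_Mapping.single 0 \<kappa> * euler i (v c)) \<in> Vsp n L"
    by (rule Vsp_mult) (use v in simp_all)
  have e2: "(\<lambda>c. Poly_Mapping.single 0 (of_nat n / (2 * of_nat L) - 1/2) * v c) \<in> Vsp n L"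
    by (rule Vsp_mult) (use v in simp_all)
  have "dunkl \<kappa> \<nu> n L i v = (\<lambda>c. (\<lambda>c. Poly_Mapping.single 0 \<kappa> * euler i (v c)) c + nuop \<nu> L i v c
    + (\<lambda>c. Poly_Mapping.single 0 (of_nat n / (2 * of_nat L) - 1/2) * v c) c
    + (\<lambda>c. \<Sum>j\<in>{i<..n}. DD j i v c + rop L i j v c) c - (\<lambda>c. \<Sum>j\<in>{1..<i}. DD i j v c + rop L j i v c) c)"
    by (simp add: dunkl_def)
  also have "\<dots> \<in> Vsp n L"
    by (intro Vsp_diff Vsp_add e1 e2 s1 s2 Vsp_nuop v i)
  finally show ?thesis .
qed

lemma Vsp_sK [simp]:
  assumes v: "v \<in> Vsp n L" and i: "i \<in> {1..<n}"
  shows "sK i v \<in> Vsp n L"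
  unfolding sK_def using i by (intro Vsp_KV Vsp_Pswap v) auto

lemma gens_Vsp:
  assumes L: "2 \<le> L" and g: "g \<in> bgens \<chi> n L" and v: "v \<in> Vsp n L"
  shows "g v \<in> Vsp n L"
proof -
  from g consider (h) b where "b \<in> {1..L-1}" "g = hchi_act \<chi> n L b" | (f) b where "b \<in> {0..L-1}" "g = f_act n L b"
    unfolding bgens_def by blast
  then show ?thesis
  proof cases
    case h then show ?thesis using v by (simp add: hchi_conv)
  next
    case f
    show ?thesis
    proof (cases "b = 0")
      case True then show ?thesis using f v L by (simp add: f_act_0)
    next
      case False
      then have b: "b \<in> {1..L-1}" using f by auto
      then have "L - b \<in> {1..L}" "Suc (L - b) \<in> {1..L}" by auto
      then have "FA n (L - b) v \<in> Vsp n L" using v by (rule Vsp_FA[rotated])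
      then show ?thesis using f(2) f_act_pos[OF b] by simp
    qed
  qed
qed

lemma UbV_Vsp:
  assumes L: "2 \<le> L"
  shows "w \<in> UbV \<chi> n L \<Longrightarrow> w \<in> Vsp n L"
proof (induction rule: UbV.induct)
  case (gen g v) then show ?case using gens_Vsp[OF L] by blast
next
  case (word g w) then show ?case using gens_Vsp[OF L] by blast
next
  case zero then show ?case by simp
next
  case (add w w') then show ?case by simp
next
  case (smul w s) then show ?case by simp
qed

lemma UbV_add: "w \<in> UbV \<chi> n L \<Longrightarrow> w' \<in> UbV \<chi> n L \<Longrightarrow> (\<lambda>c. w c + w' c) \<in> UbV \<chi> n L"
  by (rule UbV.add)

lemma UbV_cmul: "w \<in> UbV \<chi> n L \<Longrightarrow> (\<lambda>c. cst s * w c) \<in> UbV \<chi> n L"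
  using UbV.smul[of w \<chi> n L s] by (simp add: scaleV_def cst_def)

lemma UbV_diff: "w \<in> UbV \<chi> n L \<Longrightarrow> w' \<in> UbV \<chi> n L \<Longrightarrow> (\<lambda>c. w c - w' c) \<in> UbV \<chi> n L"
  using UbV_add[of w \<chi> n L "\<lambda>c. cst (-1) * w' c"] UbV_cmul[of w' \<chi> n L "-1"] by simp

lemma UbV_sum: "finite A \<Longrightarrow> (\<And>x. x \<in> A \<Longrightarrow> f x \<in> UbV \<chi> n L) \<Longrightarrow> (\<lambda>c. \<Sum>x\<in>A. f x c) \<in> UbV \<chi> n L"
proof (induction A rule: finite_induct)
  case empty then show ?case by (simp add: UbV.zero)
next
  case (insert x F)
  then show ?case using UbV_add[of "f x" \<chi> n L "\<lambda>c. \<Sum>x\<in>F. f x c"] by simp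
qed

lemma HC_in:
  assumes a: "a \<in> {1..L-1}" and v: "v \<in> Vsp n L"
  shows "HC n \<chi> a v \<in> UbV \<chi> n L"
proof -
  have b: "L - a \<in> {1..L-1}" using a by auto
  have "hchi_act \<chi> n L (L - a) \<in> bgens \<chi> n L" unfolding bgens_def using b by blast
  then have "hchi_act \<chi> n L (L - a) v \<in> UbV \<chi> n L" using v by (rule UbV.gen)
  moreover have "L - (L - a) = a" using a by auto
  ultimately show ?thesis using hchi_conv[OF b, of \<chi> n v] by simp
qed

lemma FA_in:
  assumes a: "a \<in> {1..L-1}" and v: "v \<in> Vsp n L"
  shows "FA n a v \<in> UbV \<chi> n L"
proof -
  have b: "L - a \<in> {1..L-1}" using a by auto
  have "f_act n L (L - a) \<in> bgens \<chi> n L" unfolding bgens_def using b by auto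
  then have "f_act n L (L - a) v \<in> UbV \<chi> n L" using v by (rule UbV.gen)
  moreover have "L - (L - a) = a" using a by auto
  ultimately show ?thesis using f_act_pos[OF b, of n v] by simp
qed

lemma F0_in:
  assumes v: "v \<in> Vsp n L"
  shows "F0 n L v \<in> UbV \<chi> n L"
proof -
  have "f_act n L 0 \<in> bgens \<chi> n L" unfolding bgens_def by auto
  then have "f_act n L 0 v \<in> UbV \<chi> n L" using v by (rule UbV.gen)
  then show ?thesis by (simp add: f_act_0)
qed

lemma bgens_cases:
  assumes L: "2 \<le> L" and g: "g \<in> bgens \<chi> n L"
  obtains (h) a where "a \<in> {1..L-1}" "g = HC n \<chi> a"
    | (f) a where "a \<in> {1..L-1}" "g = FA n a"
    | (f0) "g = F0 n L"
proof -
  from g consider (h') b where "b \<in> {1..L-1}" "g = hchi_act \<chi> n L b" | (f') b where "b \<in> {0..L-1}" "g = f_act n L b"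
    unfolding bgens_def by blast
  then show ?thesis
  proof cases
    case h'
    then have "L - b \<in> {1..L-1}" by auto
    moreover have "g = HC n \<chi> (L - b)" using h' by (simp add: hchi_conv fun_eq_iff)
    ultimately show ?thesis by (rule that(1))
  next
    case f'
    show ?thesis
    proof (cases "b = 0")
      case True then show ?thesis using f' that(3) by (simp add: f_act_0 fun_eq_iff)
    next
      case False
      then have b: "b \<in> {1..L-1}" using f' by auto
      then have "L - b \<in> {1..L-1}" by auto
      moreover have "g = FA n (L - b)" using f' b by (simp add: f_act_pos fun_eq_iff)
      ultimately show ?thesis by (rule that(2))
    qed
  qed
qed

lemma invariance:
  assumes L: "2 \<le> L"
    and ladd: "\<And>w w'. w \<in> Vsp n L \<Longrightarrow> w' \<in> Vsp n L \<Longrightarrow> T (\<lambda>c. w c + w' c) = (\<lambda>c. T w c + T w' c)"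
    and lsc: "\<And>w s. w \<in> Vsp n L \<Longrightarrow> T (scaleV s w) = scaleV s (T w)"
    and gens: "\<And>g v. g \<in> bgens \<chi> n L \<Longrightarrow> v \<in> Vsp n L \<Longrightarrow> T (g v) \<in> UbV \<chi> n L"
  shows "w \<in> UbV \<chi> n L \<Longrightarrow> T w \<in> UbV \<chi> n L"
proof (induction rule: UbV.induct)
  case (gen g v) then show ?case by (rule gens)
next
  case (word g w) then show ?case using gens UbV_Vsp[OF L] by blast
next
  case zero
  have z: "scaleV 0 (\<lambda>c. 0) = (\<lambda>c. 0)" by (simp add: scaleV_def)
  have "T (\<lambda>c. 0) = scaleV 0 (T (\<lambda>c. 0))" using lsc[of "\<lambda>c. 0" 0] z by simp
  also have "\<dots> = (\<lambda>c. 0)" by (simp add: scaleV_def)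
  finally show ?case by (simp add: UbV.zero)
next
  case (add w w')
  then show ?case using ladd[of w w'] UbV_Vsp[OF L] by (simp add: UbV.add)
next
  case (smul w s)
  then show ?case using lsc[of w s] UbV_Vsp[OF L] by (simp add: UbV.smul)
qed

subsection \<open>The three families of operators\<close>

lemma zmul_inv:
  assumes L: "2 \<le> L" and i: "i \<in> {1..n}"
    and w0: "w \<in> UbV \<chi> n L"
  shows "zmul i e w \<in> UbV \<chi> n L"
proof -
  have ladd: "zmul i e (\<lambda>c. w c + w' c) = (\<lambda>c. zmul i e w c + zmul i e w' c)"
    if "w \<in> Vsp n L" "w' \<in> Vsp n L" for w w'
    by (simp add: zmul_def distrib_left)
  have lsc: "zmul i e (scaleV s w) = scaleV s (zmul i e w)" if "w \<in> Vsp n L" for w s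
    by (simp add: zmul_def scaleV_def ac_simps)
  have gens: "zmul i e (g v) \<in> UbV \<chi> n L" if g: "g \<in> bgens \<chi> n L" and v: "v \<in> Vsp n L" for g v
  proof -
  have zv: "zmul i e v \<in> Vsp n L" using v i by simp
  consider (h) a where "a \<in> {1..L-1}" "g = HC n \<chi> a" | (f) a where "a \<in> {1..L-1}" "g = FA n a" | (f0) "g = F0 n L"
    by (rule bgens_cases[OF L g]) blast+
  then show "zmul i e (g v) \<in> UbV \<chi> n L"
  proof cases
    case (h a)
    have "zmul i e (HC n \<chi> a v) = HC n \<chi> a (zmul i e v)"
      by (simp add: zmul_def HC_def fun_eq_iff ac_simps)
    then show ?thesis using h HC_in[OF h(1) zv] by simp
  next
    case (f a)
    have "zmul i e (FA n a v) = FA n a (zmul i e v)"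
      unfolding zmul_def FA_def EE_def fun_eq_iff sum_distrib_left by (auto intro!: sum.cong)
    then show ?thesis using f FA_in[OF f(1) zv] by simp
  next
    case f0
    have "zmul i e (F0 n L v) = F0 n L (zmul i e v)"
      unfolding zmul_def F0_def E0_def fun_eq_iff sum_distrib_left by (auto simp: ac_simps intro!: sum.cong)
    then show ?thesis using f0 F0_in[OF zv] by simp
  qed
  qed
  show ?thesis
    apply (rule invariance[where T="zmul i e" and n=n and L=L and \<chi>=\<chi> and w=w])
        apply (rule L)
       apply (rule ladd, assumption, assumption)
      apply (rule lsc, assumption)
     apply (rule gens, assumption, assumption)
    apply (rule w0)
    done
qed

lemma Kswap_if: "Kswap i j (if P then x else 0) = (if P then Kswap i j x else 0)"
  by simp

lemma sK_inv:
  assumes L: "2 \<le> L" and i: "i \<in> {1..<n}"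
    and w0: "w \<in> UbV \<chi> n L"
  shows "sK i w \<in> UbV \<chi> n L"
proof -
  have i1: "i \<in> {1..n}" and i2: "Suc i \<in> {1..n}" using i by auto
  have ladd: "sK i (\<lambda>c. w c + w' c) = (\<lambda>c. sK i w c + sK i w' c)"
    if "w \<in> Vsp n L" "w' \<in> Vsp n L" for w w'
    by (simp add: sK_def KV_def Pswap_def Kswap_add)
  have lsc: "sK i (scaleV s w) = scaleV s (sK i w)" if "w \<in> Vsp n L" for w s
    by (simp add: sK_def KV_def Pswap_def scaleV_def Kswap_single0_mult)
  have gens: "sK i (g v) \<in> UbV \<chi> n L" if g: "g \<in> bgens \<chi> n L" and v: "v \<in> Vsp n L" for g v
  proof -
  have sv: "sK i v \<in> Vsp n L" using v i by simp
  consider (h) a where "a \<in> {1..L-1}" "g = HC n \<chi> a" | (f) a where "a \<in> {1..L-1}" "g = FA n a" | (f0) "g = F0 n L"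
    by (rule bgens_cases[OF L g]) blast+
  then show "sK i (g v) \<in> UbV \<chi> n L"
  proof cases
    case (h a)
    have "sK i (HC n \<chi> a v) = HC n \<chi> a (sK i v)"
      by (simp add: sK_def KV_def Pswap_def HC_def fun_eq_iff hco_sw[OF i1 i2] cst_def Kswap_single0_mult)
    then show ?thesis using h HC_in[OF h(1) sv] by simp
  next
    case (f a)
    have "sK i (FA n a v) = FA n a (sK i v)"
    proof
      fix c
      show "sK i (FA n a v) c = FA n a (sK i v) c"
        unfolding sK_def KV_def Pswap_def FA_sw[OF i1 i2] Kswap_sum Kswap_if
        by (simp add: FA_def EE_def sK_def KV_def Pswap_def)
    qed
    then show ?thesis using f FA_in[OF f(1) sv] by simp
  next
    case f0
    have "sK i (F0 n L v) = F0 n L (sK i v)"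
    proof
      fix c
      show "sK i (F0 n L v) c = F0 n L (sK i v) c"
        unfolding sK_def KV_def Pswap_def F0_sw[OF i1 i2] Kswap_sum Kswap_Zpow_mult Kswap_if
        by (simp add: F0_def E0_def sK_def KV_def Pswap_def)
    qed
    then show ?thesis using f0 F0_in[OF sv] by simp
  qed
  qed
  show ?thesis
    apply (rule invariance[where T="sK i" and n=n and L=L and \<chi>=\<chi> and w=w])
        apply (rule L)
       apply (rule ladd, assumption, assumption)
      apply (rule lsc, assumption)
     apply (rule gens, assumption, assumption)
    apply (rule w0)
    done
qed

lemma FA_cong:
  assumes c: "c \<in> cols n L" and a: "Suc a \<in> {1..L}" and xy: "\<And>c'. c' \<in> cols n L \<Longrightarrow> x c' = y c'"
  shows "FA n a x c = FA n a y c"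
  unfolding FA_def EE_def
proof (rule sum.cong[OF refl])
  fix k assume k: "k \<in> {1..n}"
  have "c(k := Suc a) \<in> cols n L" using cols_upd[OF c k a] .
  then show "(if c k = a then x (c(k := Suc a)) else 0) = (if c k = a then y (c(k := Suc a)) else 0)"
    using xy by simp
qed

lemma F0_cong:
  assumes c: "c \<in> cols n L" and L: "1 \<le> L" and xy: "\<And>c'. c' \<in> cols n L \<Longrightarrow> x c' = y c'"
  shows "F0 n L x c = F0 n L y c"
  unfolding F0_def E0_def
proof (rule sum.cong[OF refl])
  fix k assume k: "k \<in> {1..n}"
  have "c(k := 1) \<in> cols n L" using cols_upd[OF c k] L by simp
  then show "Zpow k (-1) * (if c k = L then x (c(k := 1)) else 0) = Zpow k (-1) * (if c k = L then y (c(k := 1)) else 0)"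
    using xy by simp
qed

lemma dunkl_inv:
  assumes L: "2 \<le> L" and i: "i \<in> {1..n}"
    and nu: "\<And>x. \<nu> x = of_nat x + \<chi> x / 2" and ka: "\<kappa> = of_nat L"
    and w0: "w \<in> UbV \<chi> n L"
  shows "dunkl \<kappa> \<nu> n L i w \<in> UbV \<chi> n L"
proof -
  have ladd: "dunkl \<kappa> \<nu> n L i (\<lambda>c. w c + w' c) = (\<lambda>c. dunkl \<kappa> \<nu> n L i w c + dunkl \<kappa> \<nu> n L i w' c)"
    if w: "w \<in> Vsp n L" and w': "w' \<in> Vsp n L" for w w'
  proof -
  show "dunkl \<kappa> \<nu> n L i (\<lambda>c. w c + w' c) = (\<lambda>c. dunkl \<kappa> \<nu> n L i w c + dunkl \<kappa> \<nu> n L i w' c)"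
  proof (rule Vsp_eqI)
    show "dunkl \<kappa> \<nu> n L i (\<lambda>c. w c + w' c) \<in> Vsp n L" using w w' i by simp
    show "(\<lambda>c. dunkl \<kappa> \<nu> n L i w c + dunkl \<kappa> \<nu> n L i w' c) \<in> Vsp n L" using w w' i by simp
    fix c assume c: "c \<in> cols n L"
    show "dunkl \<kappa> \<nu> n L i (\<lambda>c. w c + w' c) c = dunkl \<kappa> \<nu> n L i w c + dunkl \<kappa> \<nu> n L i w' c"
      unfolding dunkl_cols[OF c i] by (rule dk_add[OF w w' i])
  qed
  qed
  have lsc: "dunkl \<kappa> \<nu> n L i (scaleV s w) = scaleV s (dunkl \<kappa> \<nu> n L i w)"
    if w: "w \<in> Vsp n L" for w s
  proof -
  show "dunkl \<kappa> \<nu> n L i (scaleV s w) = scaleV s (dunkl \<kappa> \<nu> n L i w)"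
  proof (rule Vsp_eqI)
    show "dunkl \<kappa> \<nu> n L i (scaleV s w) \<in> Vsp n L" using w i by simp
    show "scaleV s (dunkl \<kappa> \<nu> n L i w) \<in> Vsp n L" using w i by simp
    fix c assume c: "c \<in> cols n L"
    have e: "scaleV s w = (\<lambda>c. cst s * w c)" by (simp add: scaleV_def cst_def)
    show "dunkl \<kappa> \<nu> n L i (scaleV s w) c = scaleV s (dunkl \<kappa> \<nu> n L i w) c"
      unfolding dunkl_cols[OF c i] e using dk_scale[OF w i] by (simp add: scaleV_def cst_def dunkl_cols[OF c i])
  qed
  qed
  have gens: "dunkl \<kappa> \<nu> n L i (g v) \<in> UbV \<chi> n L" if g: "g \<in> bgens \<chi> n L" and v: "v \<in> Vsp n L" for g v
  proof -
  have dv: "dunkl \<kappa> \<nu> n L i v \<in> Vsp n L" using v i by simp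
  consider (h) a where "a \<in> {1..L-1}" "g = HC n \<chi> a" | (f) a where "a \<in> {1..L-1}" "g = FA n a" | (f0) "g = F0 n L"
    by (rule bgens_cases[OF L g]) blast+
  then show "dunkl \<kappa> \<nu> n L i (g v) \<in> UbV \<chi> n L"
  proof cases
    case (h a)
    have "dunkl \<kappa> \<nu> n L i (HC n \<chi> a v) = HC n \<chi> a (dunkl \<kappa> \<nu> n L i v)"
    proof (rule Vsp_eqI)
      show "dunkl \<kappa> \<nu> n L i (HC n \<chi> a v) \<in> Vsp n L" using v i by simp
      show "HC n \<chi> a (dunkl \<kappa> \<nu> n L i v) \<in> Vsp n L" using dv by simp
      fix c assume c: "c \<in> cols n L"
      show "dunkl \<kappa> \<nu> n L i (HC n \<chi> a v) c = HC n \<chi> a (dunkl \<kappa> \<nu> n L i v) c"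
        unfolding dunkl_cols[OF c i] dk_HC[OF v i] by (simp add: HC_def dunkl_cols[OF c i])
    qed
    then show ?thesis using h HC_in[OF h(1) dv] by simp
  next
    case (f a)
    define W where "W = (\<lambda>c. dunkl \<kappa> \<nu> n L i v c + cst (1/2) * HH a i v c)"
    have W: "W \<in> Vsp n L" unfolding W_def using dv v by simp
    have a1: "a \<in> {1..L}" "Suc a \<in> {1..L}" using f(1) by auto
    have EEv: "EE a i v \<in> Vsp n L" using v a1 i by simp
    have "dunkl \<kappa> \<nu> n L i (FA n a v) = (\<lambda>c. FA n a W c + cst (1/2) * HC n \<chi> a (EE a i v) c)"
    proof (rule Vsp_eqI)
      show "dunkl \<kappa> \<nu> n L i (FA n a v) \<in> Vsp n L" using v i a1 by simp
      show "(\<lambda>c. FA n a W c + cst (1/2) * HC n \<chi> a (EE a i v) c) \<in> Vsp n L"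
        using W EEv a1 by simp
      fix c assume c: "c \<in> cols n L"
      have "FA n a (\<lambda>c. dk \<kappa> \<nu> n L i v c + cst (1/2) * HH a i v c) c = FA n a W c"
        by (rule FA_cong[OF c a1(2)]) (simp add: W_def dunkl_cols[OF _ i])
      then show "dunkl \<kappa> \<nu> n L i (FA n a v) c = FA n a W c + cst (1/2) * HC n \<chi> a (EE a i v) c"
        unfolding dunkl_cols[OF c i] dk_FA[OF v i nu] by simp
    qed
    moreover have "(\<lambda>c. FA n a W c + cst (1/2) * HC n \<chi> a (EE a i v) c) \<in> UbV \<chi> n L"
      by (rule UbV_add[OF FA_in[OF f(1) W] UbV_cmul[OF HC_in[OF f(1) EEv]]])
    ultimately show ?thesis using f by simp
  next
    case f0
    define W where "W = (\<lambda>c. dunkl \<kappa> \<nu> n L i v c + cst (1/2) * GG L i v c)"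
    define Y where "Y = (\<lambda>c. Zpow i (-1) * E0 L i v c)"
    have W: "W \<in> Vsp n L" unfolding W_def using dv v by simp
    have L1: "1 \<le> L" using L by simp
    have Y: "Y \<in> Vsp n L" unfolding Y_def using v i L1 by (intro Vsp_mult Vsp_E0) simp_all
    have "dunkl \<kappa> \<nu> n L i (F0 n L v) = (\<lambda>c. F0 n L W c - cst (1/2) * (\<Sum>a\<in>{1..L-1}. HC n \<chi> a Y c))"
    proof (rule Vsp_eqI)
      show "dunkl \<kappa> \<nu> n L i (F0 n L v) \<in> Vsp n L" using v i L1 by simp
      have "(\<lambda>c. \<Sum>a\<in>{1..L-1}. HC n \<chi> a Y c) \<in> Vsp n L" using Y by (intro Vsp_sum) simp
      then show "(\<lambda>c. F0 n L W c - cst (1/2) * (\<Sum>a\<in>{1..L-1}. HC n \<chi> a Y c)) \<in> Vsp n L"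
        using W L1 by (intro Vsp_diff Vsp_cmul Vsp_F0) simp_all
      fix c assume c: "c \<in> cols n L"
      have "F0 n L (\<lambda>c. dk \<kappa> \<nu> n L i v c + cst (1/2) * GG L i v c) c = F0 n L W c"
        by (rule F0_cong[OF c L1]) (simp add: W_def dunkl_cols[OF _ i])
      then show "dunkl \<kappa> \<nu> n L i (F0 n L v) c = F0 n L W c - cst (1/2) * (\<Sum>a\<in>{1..L-1}. HC n \<chi> a Y c)"
        unfolding dunkl_cols[OF c i] dk_F0[OF v i c L nu ka] Y_def by simp
    qed
    moreover have "(\<lambda>c. F0 n L W c - cst (1/2) * (\<Sum>a\<in>{1..L-1}. HC n \<chi> a Y c)) \<in> UbV \<chi> n L"
    proof (rule UbV_diff[OF F0_in[OF W]])
      have "(\<lambda>c. \<Sum>a\<in>{1..L-1}. HC n \<chi> a Y c) \<in> UbV \<chi> n L"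
        by (rule UbV_sum) (simp_all add: HC_in[OF _ Y])
      then show "(\<lambda>c. cst (1/2) * (\<Sum>a\<in>{1..L-1}. HC n \<chi> a Y c)) \<in> UbV \<chi> n L"
        by (rule UbV_cmul)
    qed
    ultimately show ?thesis using f0 by simp
  qed
  qed
  show ?thesis
    apply (rule invariance[where T="dunkl \<kappa> \<nu> n L i" and n=n and L=L and \<chi>=\<chi> and w=w])
        apply (rule L)
       apply (rule ladd, assumption, assumption)
      apply (rule lsc, assumption)
     apply (rule gens, assumption, assumption)
    apply (rule w0)
    done
qed

theorem proposition2p9:
  fixes n L :: nat and \<chi> :: "nat \<Rightarrow> complex"
  assumes "L \<ge> 2" and "n \<ge> 1"
  defines "\<kappa> \<equiv> of_nat L"
      and "\<nu> \<equiv> (\<lambda>a. of_nat a + \<chi> a / 2)"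
  shows "\<forall>w \<in> UbV \<chi> n L.
           (\<forall>i \<in> {1..n}. zmul i 1 w \<in> UbV \<chi> n L \<and> zmul i (-1) w \<in> UbV \<chi> n L
                        \<and> dunkl \<kappa> \<nu> n L i w \<in> UbV \<chi> n L)
         \<and> (\<forall>i \<in> {1..<n}. sK i w \<in> UbV \<chi> n L)"
proof (intro ballI conjI)
  fix w assume w: "w \<in> UbV \<chi> n L"
  fix i assume i: "i \<in> {1..n}"
  show "zmul i 1 w \<in> UbV \<chi> n L" by (rule zmul_inv[OF assms(1) i w])
  show "zmul i (-1) w \<in> UbV \<chi> n L" by (rule zmul_inv[OF assms(1) i w])
  show "dunkl \<kappa> \<nu> n L i w \<in> UbV \<chi> n L"
    by (rule dunkl_inv[OF assms(1) i _ _ w]) (simp_all add: \<nu>_def \<kappa>_def)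
next
  fix w assume w: "w \<in> UbV \<chi> n L"
  fix i assume i: "i \<in> {1..<n}"
  show "sK i w \<in> UbV \<chi> n L" by (rule sK_inv[OF assms(1) i w])
qed

end
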